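(* Let $k$ be an algebraically closed field of characteristic $p$, $f\ge1$ an integer, and for each $i\in\mathbf Z/f\mathbf Z$ let $W_i$ be a $k$-vector space of dimension $m>0$ (the same $m$ for all $i$). For each $i\in\mathbf Z/f\mathbf Z$ let $\varphi_i:W_{i-1}\to W_i$ be semilinear with respect to an automorphism $\sigma_i$ of $k$ and $\psi_i:W_i\to W_{i-1}$ be semilinear with respect to an automorphism $\tau_i$ of $k$, where each $\sigma_i,\tau_i$ is an integral (positive, negative or zero) power of the Frobenius automorphism $x\mapsto x^p$ of $k$. Assume $\psi_i\circ\varphi_i=0$ and $\varphi_i\circ\psi_i=0$ for all $i$. Then there exist lines $\ell_i\subset W_i$ ($i\in\mathbf Z/f\mathbf Z$) such that $\varphi_i(\ell_{i-1})\subset\ell_i$ and $\psi_i(\ell_i)\subset\ell_{i-1}$ for all $i\in\mathbf Z/f\mathbf Z$. *)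

theory Defs
  imports "HOL-Computational_Algebra.Computational_Algebra"
begin

text \<open>Integral powers of the Frobenius x \<mapsto> x^p: for n \<ge> 0 the map x \<mapsto> x^(p^n),
  for n < 0 the inverse of x \<mapsto> x^(p^(-n)) (a bijection on a perfect field).\<close>
definition frob_pow :: "nat \<Rightarrow> int \<Rightarrow> 'k::field \<Rightarrow> 'k" where
  "frob_pow p n = (if 0 \<le> n then (\<lambda>x. x ^ (p ^ nat n))
                    else inv (\<lambda>x. x ^ (p ^ nat (- n))))"

definition semilinear_on ::
  "('k \<Rightarrow> 'v \<Rightarrow> 'v) \<Rightarrow> ('k \<Rightarrow> 'k) \<Rightarrow> 'v set \<Rightarrow> 'v set \<Rightarrow> ('v \<Rightarrow> 'v::ab_group_add) \<Rightarrow> bool" where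
  "semilinear_on s \<sigma> A B h \<longleftrightarrow>
     (\<forall>x\<in>A. h x \<in> B) \<and> (\<forall>x\<in>A. \<forall>y\<in>A. h (x + y) = h x + h y) \<and>
     (\<forall>c. \<forall>x\<in>A. h (s c x) = s (\<sigma> c) (h x))"

text \<open>Predecessor in Z/fZ, indices represented by 0..<f.\<close>
definition predf :: "nat \<Rightarrow> nat \<Rightarrow> nat" where
  "predf f i = (i + f - 1) mod f"

end

theory Submission
  imports Defs
begin

lemma pw_inj:
  fixes x y :: "'k::alg_closed_field"
  assumes "prime CHAR('k)" "x ^ (CHAR('k) ^ k) = y ^ (CHAR('k) ^ k)"
  shows "x = y"
proof -
  have "((x - y) + y) ^ (CHAR('k) ^ k) = (x - y) ^ (CHAR('k) ^ k) + y ^ (CHAR('k) ^ k)"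
    by (rule freshmans_dream'[OF assms(1) refl])
  then have "(x - y) ^ (CHAR('k) ^ k) = 0" using assms(2) by simp
  then show ?thesis by simp
qed

lemma pw_surj:
  fixes y :: "'k::alg_closed_field"
  assumes "prime CHAR('k)"
  shows "\<exists>x. x ^ (CHAR('k) ^ k) = y"
proof -
  define P where "P = monom (1::'k) (CHAR('k) ^ k) - [:y:]"
  have pos: "CHAR('k) ^ k > 0" using assms prime_gt_0_nat by auto
  have "coeff P (CHAR('k) ^ k) = 1" using pos unfolding P_def using prime_gt_0_nat[OF assms] by (simp add: coeff_monom coeff_pCons split: nat.split)
  then have "degree P \<ge> CHAR('k) ^ k" by (intro le_degree) simp
  then have "degree P > 0" using pos by linarith
  then obtain x where "poly P x = 0" using alg_closed_imp_poly_has_root by blast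
  then show ?thesis unfolding P_def by (auto simp: poly_monom)
qed

lemma pw_bij:
  assumes "prime CHAR('k::alg_closed_field)"
  shows "bij (\<lambda>x::'k. x ^ (CHAR('k) ^ k))"
  unfolding bij_def inj_def surj_def using pw_inj[OF assms] pw_surj[OF assms] by metis

lemma frob_nonneg: "0 \<le> n \<Longrightarrow> frob_pow p n x = x ^ (p ^ nat n)"
  by (simp add: frob_pow_def)

lemma frob_negI:
  fixes x z :: "'k::alg_closed_field"
  assumes "prime CHAR('k)" "p = CHAR('k)" "n < 0" "z ^ (p ^ nat (-n)) = x"
  shows "frob_pow p n x = z"
proof -
  have b: "bij (\<lambda>x::'k. x ^ (p ^ nat (-n)))" using pw_bij[OF assms(1)] assms(2) by simp
  have "frob_pow p n x = inv (\<lambda>x::'k. x ^ (p ^ nat (-n))) x" using assms(3) by (simp add: frob_pow_def)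
  also have "\<dots> = z" using assms(4) b by (metis bij_def inv_f_f)
  finally show ?thesis .
qed

lemma frob_neg_pw:
  fixes x :: "'k::alg_closed_field"
  assumes "prime CHAR('k)" "p = CHAR('k)" "n < 0"
  shows "(frob_pow p n x) ^ (p ^ nat (-n)) = x"
proof -
  obtain z :: 'k where z: "z ^ (p ^ nat (-n)) = x" using pw_surj[OF assms(1)] assms(2) by blast
  show ?thesis using frob_negI[OF assms z] z by simp
qed

lemma frob_comp:
  fixes x :: "'k::alg_closed_field"
  assumes pr: "prime CHAR('k)" and pp: "p = CHAR('k)"
  shows "frob_pow p a (frob_pow p b x) = frob_pow p (a + b) x"
proof -
  note inj = pw_inj[OF pr, folded pp]
  have pm: "\<And>y::'k. \<And>i j. (y ^ (p ^ i)) ^ (p ^ j) = y ^ (p ^ (i + j))"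
    by (simp add: power_mult[symmetric] power_add mult.commute)
  show ?thesis
  proof (cases "0 \<le> a")
    case a: True
    show ?thesis
    proof (cases "0 \<le> b")
      case True
      then show ?thesis using a by (simp add: frob_nonneg pm nat_add_distrib add.commute)
    next
      case b: False
      define y where "y = frob_pow p b x"
      have y: "y ^ (p ^ nat (-b)) = x" unfolding y_def using frob_neg_pw[OF pr pp] b by simp
      show ?thesis
      proof (cases "0 \<le> a + b")
        case True
        have "x ^ (p ^ nat (a + b)) = y ^ (p ^ (nat (-b) + nat (a+b)))" using y pm by metis
        also have "nat (-b) + nat (a+b) = nat a" using True b by simp
        finally show ?thesis using a True by (simp add: frob_nonneg y_def)
      next
        case False
        have ab: "a + b < 0" using False by simp
        have "frob_pow p (a + b) x = y ^ (p ^ nat a)"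
        proof (rule frob_negI[OF pr pp ab])
          have "(y ^ p ^ nat a) ^ p ^ nat (- (a + b)) = y ^ (p ^ (nat a + nat (- (a + b))))" by (rule pm)
          also have "nat a + nat (- (a + b)) = nat (-b)" using False a by simp
          finally show "(y ^ p ^ nat a) ^ p ^ nat (- (a + b)) = x" using y by simp
        qed
        then show ?thesis using a by (simp add: frob_nonneg y_def)
      qed
    qed
  next
    case a: False
    define z where "z = frob_pow p a (frob_pow p b x)"
    have z: "z ^ (p ^ nat (-a)) = frob_pow p b x" unfolding z_def using frob_neg_pw[OF pr pp] a by simp
    show ?thesis
    proof (cases "0 \<le> b")
      case b: True
      have zb: "z ^ (p ^ nat (-a)) = x ^ (p ^ nat b)" using z b by (simp add: frob_nonneg)
      show ?thesis
      proof (cases "0 \<le> a + b")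
        case True
        have "(x ^ (p ^ nat (a+b))) ^ (p ^ nat (-a)) = x ^ (p ^ (nat (a+b) + nat (-a)))" by (rule pm)
        also have "nat (a+b) + nat (-a) = nat b" using True a by simp
        finally have "z = x ^ (p ^ nat (a+b))" using zb inj by metis
        then show ?thesis using True by (simp add: frob_nonneg z_def)
      next
        case False
        define w where "w = frob_pow p (a+b) x"
        have ab: "a + b < 0" using False by simp
        have w: "w ^ (p ^ nat (-(a+b))) = x" unfolding w_def by (rule frob_neg_pw[OF pr pp ab])
        have "(w ^ (p ^ nat (-(a+b)))) ^ (p ^ nat b) = w ^ (p ^ (nat (-(a+b)) + nat b))" by (rule pm)
        also have "nat (-(a+b)) + nat b = nat (-a)" using False b by simp
        finally have "z = w" using zb w inj by metis
        then show ?thesis unfolding z_def w_def .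
      qed
    next
      case b: False
      define y where "y = frob_pow p b x"
      have y: "y ^ (p ^ nat (-b)) = x" unfolding y_def using frob_neg_pw[OF pr pp] b by simp
      have "frob_pow p (a + b) x = z"
      proof (rule frob_negI[OF pr pp])
        show "a + b < 0" using a b by simp
        have e: "nat (- (a + b)) = nat (-a) + nat (-b)" using a b by simp
        have "z ^ p ^ nat (- (a + b)) = (z ^ (p ^ nat (-a))) ^ (p ^ nat (-b))"
          unfolding e by (rule pm[symmetric])
        then show "z ^ p ^ nat (- (a + b)) = x" using z y y_def by simp
      qed
      then show ?thesis by (simp add: z_def)
    qed
  qed
qed

lemma frob_zero_exp [simp]: "frob_pow p 0 x = x"
  by (simp add: frob_pow_def)

lemma frob_inv1:
  fixes x :: "'k::alg_closed_field"
  assumes "prime CHAR('k)" "p = CHAR('k)"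
  shows "frob_pow p (-n) (frob_pow p n x) = x" "frob_pow p n (frob_pow p (-n) x) = x"
  using frob_comp[OF assms, of "-n" n x] frob_comp[OF assms, of n "-n" x] by simp_all

lemma frob_add:
  fixes x y :: "'k::alg_closed_field"
  assumes pr: "prime CHAR('k)" and pp: "p = CHAR('k)"
  shows "frob_pow p n (x + y) = frob_pow p n x + frob_pow p n y"
proof (cases "0 \<le> n")
  case True
  then show ?thesis using freshmans_dream'[OF pr, of "p ^ nat n" "nat n"] pp by (simp add: frob_nonneg)
next
  case False
  have "frob_pow p n x + frob_pow p n y = frob_pow p n (frob_pow p (-n) (frob_pow p n x + frob_pow p n y))"
    using frob_inv1[OF pr pp] by simp
  also have "frob_pow p (-n) (frob_pow p n x + frob_pow p n y) = x + y"
    using False freshmans_dream'[OF pr, of "p ^ nat (-n)" "nat (-n)"] pp frob_inv1[OF pr pp, of "-n"]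
    by (simp add: frob_nonneg)
  finally show ?thesis by simp
qed

lemma frob_mult:
  fixes x y :: "'k::alg_closed_field"
  assumes pr: "prime CHAR('k)" and pp: "p = CHAR('k)"
  shows "frob_pow p n (x * y) = frob_pow p n x * frob_pow p n y"
proof (cases "0 \<le> n")
  case True
  then show ?thesis by (simp add: frob_nonneg power_mult_distrib)
next
  case False
  have "frob_pow p n x * frob_pow p n y = frob_pow p n (frob_pow p (-n) (frob_pow p n x * frob_pow p n y))"
    using frob_inv1[OF pr pp] by simp
  also have "frob_pow p (-n) (frob_pow p n x * frob_pow p n y) = x * y"
    using False frob_inv1[OF pr pp, of "-n"]
    by (simp add: frob_nonneg power_mult_distrib)
  finally show ?thesis by simp
qed

lemma frob_0 [simp]:
  assumes pr: "prime CHAR('k::alg_closed_field)" and pp: "p = CHAR('k)"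
  shows "frob_pow p n (0::'k) = 0"
proof (cases "0 \<le> n")
  case True
  then show ?thesis using prime_gt_0_nat[OF pr] pp by (simp add: frob_nonneg)
next
  case False
  then have "n < 0" by simp
  then show ?thesis
    by (rule frob_negI[OF pr pp]) (use prime_gt_0_nat[OF pr] pp in simp)
qed

lemma frob_eq0_iff:
  fixes x :: "'k::alg_closed_field"
  assumes pr: "prime CHAR('k)" and pp: "p = CHAR('k)"
  shows "frob_pow p n x = 0 \<longleftrightarrow> x = 0"
proof
  assume "frob_pow p n x = 0"
  then have "frob_pow p (-n) (frob_pow p n x) = 0" using frob_0[OF pr pp, of "-n"] by simp
  then show "x = 0" using frob_inv1(1)[OF pr pp, of n x] by simp
qed (simp add: frob_0[OF pr pp])


context vector_space begin

lemma SL_in: "semilinear_on scale \<sigma> A B h \<Longrightarrow> x \<in> A \<Longrightarrow> h x \<in> B"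
  by (simp add: semilinear_on_def)
lemma SL_add: "semilinear_on scale \<sigma> A B h \<Longrightarrow> x \<in> A \<Longrightarrow> y \<in> A \<Longrightarrow> h (x + y) = h x + h y"
  by (simp add: semilinear_on_def)
lemma SL_scale: "semilinear_on scale \<sigma> A B h \<Longrightarrow> x \<in> A \<Longrightarrow> h (c *s x) = \<sigma> c *s h x"
  by (simp add: semilinear_on_def)

lemma SL_0:
  assumes "semilinear_on scale \<sigma> A B h" "subspace A"
  shows "h 0 = 0"
proof -
  have "h (0 + 0) = h 0 + h 0" using SL_add[OF assms(1)] subspace_0[OF assms(2)] by blast
  then show ?thesis by simp
qed

lemma SL_sum:
  assumes "semilinear_on scale \<sigma> A B h" "subspace A" "finite I" "\<And>i. i \<in> I \<Longrightarrow> x i \<in> A"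
  shows "h (\<Sum>i\<in>I. x i) = (\<Sum>i\<in>I. h (x i))"
  using assms(3,4)
proof (induction I rule: finite_induct)
  case empty
  then show ?case using SL_0[OF assms(1,2)] by simp
next
  case (insert a F)
  have "sum x F \<in> A" using insert subspace_sum[OF assms(2)] by blast
  then show ?case using insert SL_add[OF assms(1)] by simp
qed

lemma SL_lc:
  assumes "semilinear_on scale \<sigma> A B h" "subspace A" "finite I" "\<And>i. i \<in> I \<Longrightarrow> x i \<in> A"
  shows "h (\<Sum>i\<in>I. c i *s x i) = (\<Sum>i\<in>I. \<sigma> (c i) *s h (x i))"
proof -
  have "h (\<Sum>i\<in>I. c i *s x i) = (\<Sum>i\<in>I. h (c i *s x i))"
    using assms(4) subspace_scale[OF assms(2)] by (intro SL_sum[OF assms(1,2,3)]) auto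
  also have "\<dots> = (\<Sum>i\<in>I. \<sigma> (c i) *s h (x i))"
    using SL_scale[OF assms(1)] assms(4) by simp
  finally show ?thesis .
qed

lemma SL_diff:
  assumes "semilinear_on scale \<sigma> A B h" "subspace A" "x \<in> A" "y \<in> A"
  shows "h (x - y) = h x - h y"
proof -
  have "h ((x - y) + y) = h (x - y) + h y"
    using SL_add[OF assms(1)] subspace_diff[OF assms(2)] assms(3,4) by blast
  then show ?thesis by simp
qed

lemma SL_inj0:
  assumes "semilinear_on scale \<sigma> A B h" "subspace A" "\<forall>x\<in>A. h x = 0 \<longrightarrow> x = 0"
    "x \<in> A" "y \<in> A" "h x = h y"
  shows "x = y"
proof -
  have "h (x - y) = 0" using SL_diff[OF assms(1,2,4,5)] assms(6) by simp
  then have "x - y = 0" using assms(3) subspace_diff[OF assms(2) assms(4,5)] by blast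
  then show ?thesis by simp
qed

lemma SL_image_sub:
  assumes "semilinear_on scale \<sigma> A B h" "subspace A" "\<And>c. \<sigma> (\<tau> c) = c"
  shows "subspace (h ` A)"
  unfolding subspace_def
proof (intro conjI ballI allI)
  show "0 \<in> h ` A" using SL_0[OF assms(1,2)] subspace_0[OF assms(2)] by (metis image_eqI)
next
  fix x y assume "x \<in> h ` A" "y \<in> h ` A"
  then obtain a b where "a \<in> A" "b \<in> A" "x = h a" "y = h b" by blast
  then show "x + y \<in> h ` A" using SL_add[OF assms(1)] subspace_add[OF assms(2)] by (metis image_eqI)
next
  fix c x assume "x \<in> h ` A"
  then obtain a where a: "a \<in> A" "x = h a" by blast
  then have "h (\<tau> c *s a) = c *s x" using SL_scale[OF assms(1)] assms(3) by simp
  then show "c *s x \<in> h ` A" using subspace_scale[OF assms(2) a(1)] by (metis image_eqI)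
qed

lemma SL_ker_sub:
  assumes "semilinear_on scale \<sigma> A B h" "subspace A"
  shows "subspace {x\<in>A. h x = 0}"
  unfolding subspace_def
proof (intro conjI ballI allI)
  show "0 \<in> {x \<in> A. h x = 0}" using SL_0[OF assms] subspace_0[OF assms(2)] by simp
next
  fix x y assume "x \<in> {x \<in> A. h x = 0}" "y \<in> {x \<in> A. h x = 0}"
  then show "x + y \<in> {x \<in> A. h x = 0}" using SL_add[OF assms(1)] subspace_add[OF assms(2)] by simp
next
  fix c x assume "x \<in> {x \<in> A. h x = 0}"
  then show "c *s x \<in> {x \<in> A. h x = 0}" using SL_scale[OF assms(1)] subspace_scale[OF assms(2)] by simp
qed

lemma SL_comp:
  assumes "semilinear_on scale \<sigma> A B h" "semilinear_on scale \<tau> B C g"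
  shows "semilinear_on scale (\<lambda>c. \<tau> (\<sigma> c)) A C (\<lambda>x. g (h x))"
  using assms unfolding semilinear_on_def by auto

lemma SL_mono:
  assumes "semilinear_on scale \<sigma> A B h" "A' \<subseteq> A" "\<And>x. x \<in> A' \<Longrightarrow> h x \<in> B'"
  shows "semilinear_on scale \<sigma> A' B' h"
  using assms unfolding semilinear_on_def by blast

lemma SL_inv:
  assumes "semilinear_on scale \<sigma> A B h" "bij_betw h A B" "\<And>c. \<sigma> (\<tau> c) = c" "subspace A"
  shows "semilinear_on scale \<tau> B A (inv_into A h)"
proof -
  have inj: "inj_on h A" and im: "h ` A = B" using assms(2) by (auto simp: bij_betw_def)
  have iA: "inv_into A h y \<in> A" if "y \<in> B" for y using that im by (metis inv_into_into)
  have hi: "h (inv_into A h y) = y" if "y \<in> B" for y using that im by (metis f_inv_into_f)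
  have ih: "inv_into A h (h x) = x" if "x \<in> A" for x using that inj by (metis inv_into_f_f)
  show ?thesis unfolding semilinear_on_def
  proof (intro conjI ballI allI)
    fix x assume "x \<in> B" then show "inv_into A h x \<in> A" by (rule iA)
  next
    fix x y assume xy: "x \<in> B" "y \<in> B"
    have "h (inv_into A h x + inv_into A h y) = x + y"
      using SL_add[OF assms(1) iA[OF xy(1)] iA[OF xy(2)]] hi xy by simp
    then show "inv_into A h (x + y) = inv_into A h x + inv_into A h y"
      using ih subspace_add[OF assms(4) iA[OF xy(1)] iA[OF xy(2)]] by metis
  next
    fix c x assume x: "x \<in> B"
    have "h (\<tau> c *s inv_into A h x) = c *s x"
      using SL_scale[OF assms(1) iA[OF x]] hi[OF x] assms(3) by simp
    then show "inv_into A h (c *s x) = \<tau> c *s inv_into A h x"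
      using ih subspace_scale[OF assms(4) iA[OF x]] by metis
  qed
qed

lemma SL_span_image:
  assumes "semilinear_on scale \<sigma> A B h" "subspace A" "finite S" "S \<subseteq> A" "y \<in> span S"
  shows "h y \<in> span (h ` S)"
proof -
  obtain u where u: "y = (\<Sum>v\<in>S. u v *s v)" using assms(5) span_finite[OF assms(3)] by auto
  have "h y = (\<Sum>v\<in>S. \<sigma> (u v) *s h v)" unfolding u using assms(4) by (intro SL_lc[OF assms(1,2,3)]) auto
  also have "\<dots> \<in> span (h ` S)" by (intro span_sum span_scale span_base) auto
  finally show ?thesis .
qed

lemma D_basis:
  assumes "subspace V" "dim V > 0"
  obtains B where "finite B" "independent B" "B \<subseteq> V" "V \<subseteq> span B" "card B = dim V"
proof -
  obtain B where "B \<subseteq> V" "independent B" "V \<subseteq> span B" "card B = dim V" by (rule basis_exists)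
  moreover have "finite B" using calculation(4) assms(2) by (metis card.infinite less_irrefl)
  ultimately show ?thesis using that by blast
qed

lemma D_indep_le:
  assumes "subspace V" "dim V > 0" "A \<subseteq> V" "independent A"
  shows "finite A \<and> card A \<le> dim V"
proof -
  obtain B where "finite B" "independent B" "B \<subseteq> V" "V \<subseteq> span B" "card B = dim V"
    using D_basis[OF assms(1,2)] by blast
  then show ?thesis using independent_span_bound[of B A] assms(3,4) by auto
qed

lemma D_spans:
  assumes "subspace V" "dim V > 0" "A \<subseteq> V" "independent A" "card A = dim V"
  shows "V \<subseteq> span A"
proof
  fix y assume y: "y \<in> V"
  show "y \<in> span A"
  proof (rule ccontr)
    assume n: "y \<notin> span A"
    have fA: "finite A" using D_indep_le[OF assms(1-4)] by blast
    have "independent (insert y A)" using independent_insertI[OF n assms(4)] .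
    moreover have "insert y A \<subseteq> V" using y assms(3) by blast
    ultimately have "card (insert y A) \<le> dim V" using D_indep_le[OF assms(1,2)] by blast
    moreover have "y \<notin> A" using n span_base by blast
    ultimately show False using fA assms(5) by simp
  qed
qed

lemma D_nz:
  assumes "subspace V" "dim V > 0"
  shows "\<exists>x\<in>V. x \<noteq> 0"
proof -
  obtain B where B: "finite B" "independent B" "B \<subseteq> V" "V \<subseteq> span B" "card B = dim V"
    using D_basis[OF assms] by blast
  then have "B \<noteq> {}" using assms(2) by auto
  then obtain b where b: "b \<in> B" by blast
  then have "b \<noteq> 0" using B(2) dependent_zero by metis
  then show ?thesis using b B(3) by blast
qed

lemma D_sub:
  assumes "subspace S" "dim S > 0" "subspace T" "T \<subseteq> S" "x \<in> T" "x \<noteq> 0"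
  shows "dim T > 0" "dim T \<le> dim S" "dim T = dim S \<Longrightarrow> T = S"
proof -
  obtain A where A: "A \<subseteq> T" "independent A" "T \<subseteq> span A" "card A = dim T" by (rule basis_exists)
  have AS: "A \<subseteq> S" using A(1) assms(4) by (rule subset_trans)
  have fA: "finite A \<and> card A \<le> dim S" by (rule D_indep_le[OF assms(1,2) AS A(2)])
  show "dim T \<le> dim S" using fA A(4) by simp
  have "A \<noteq> {}"
  proof
    assume "A = {}"
    then have "x \<in> span {}" using A(3) assms(5) by auto
    then show False using assms(6) by simp
  qed
  then have "card A > 0" using fA by (simp add: card_gt_0_iff)
  then show "dim T > 0" using A(4) by simp
  assume "dim T = dim S"
  then have "S \<subseteq> span A" using D_spans[OF assms(1,2) AS A(2)] A(4) by simp
  also have "span A \<subseteq> T" by (rule span_minimal[OF A(1) assms(3)])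
  finally show "T = S" using assms(4) by (rule subset_antisym[rotated])
qed

lemma D_line:
  assumes "x \<noteq> 0"
  shows "dim (span {x}) = 1"
  using assms by (simp add: dim_span dim_eq_card_independent)

lemma D_surj_inj:
  assumes "semilinear_on scale \<sigma> V V h" "subspace V" "dim V > 0" "h ` V = V"
    "x \<in> V" "h x = 0"
  shows "x = 0"
proof (rule ccontr)
  assume x0: "x \<noteq> 0"
  have ix: "independent {x}" using x0 by simp
  have xV: "{x} \<subseteq> V" using assms(5) by simp
  obtain B where B: "{x} \<subseteq> B" "B \<subseteq> V" "independent B" "V \<subseteq> span B"
    by (rule maximal_independent_subset_extend[OF xV ix])
  have fB: "finite B \<and> card B \<le> dim V" by (rule D_indep_le[OF assms(2,3) B(2,3)])
  have cB: "card B = dim V" by (rule basis_card_eq_dim[OF B(2,4,3)])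
  have "V \<subseteq> span (h ` (B - {x}))"
  proof
    fix v assume "v \<in> V"
    then obtain u where u: "u \<in> V" "v = h u" using assms(4) by blast
    have "u \<in> span B" using u(1) B(4) by blast
    then have "h u \<in> span (h ` B)" using fB by (intro SL_span_image[OF assms(1,2) _ B(2)]) auto
    also have "h ` B = insert 0 (h ` (B - {x}))" using B(1) assms(6) by auto
    finally show "v \<in> span (h ` (B - {x}))" using u by simp
  qed
  then have "dim V \<le> card (h ` (B - {x}))" by (rule dim_le_card) (use fB in simp)
  also have "\<dots> \<le> card (B - {x})" using fB by (intro card_image_le) simp
  also have "\<dots> < card B" using fB B(1) by (intro psubset_card_mono) auto
  finally show False using cB by simp
qed

lemma D_inj_surj:
  assumes "semilinear_on scale \<sigma> V1 V2 h" "subspace V1" "subspace V2" "dim V1 > 0" "dim V2 = dim V1"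
    "\<forall>x\<in>V1. h x = 0 \<longrightarrow> x = 0" "\<And>c. \<sigma> (\<tau> c) = c" "\<sigma> 0 = 0"
  shows "h ` V1 = V2"
proof -
  obtain B where B: "finite B" "independent B" "B \<subseteq> V1" "V1 \<subseteq> span B" "card B = dim V1"
    by (rule D_basis[OF assms(2,4)])
  have inj: "inj_on h V1"
    by (rule inj_onI) (rule SL_inj0[OF assms(1,2,6)])
  then have injB: "inj_on h B" using B(3) by (rule inj_on_subset)
  have Bi: "\<forall>S\<subseteq>B. finite S \<longrightarrow> (\<forall>u. (\<Sum>v\<in>S. u v *s v) = 0 \<longrightarrow> (\<forall>v\<in>S. u v = 0))"
    using B(2) by (simp only: independent_explicit_finite_subsets)
  have "independent (h ` B)"
  proof (rule independent_if_scalars_zero)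
    show "finite (h ` B)" using B(1) by simp
    fix f y assume s: "(\<Sum>x\<in>h ` B. f x *s x) = 0" and y: "y \<in> h ` B"
    have "(\<Sum>x\<in>h ` B. f x *s x) = (\<Sum>b\<in>B. f (h b) *s h b)" using sum.reindex[OF injB] by simp
    also have "\<dots> = (\<Sum>b\<in>B. \<sigma> (\<tau> (f (h b))) *s h b)" using assms(7) by simp
    also have "\<dots> = h (\<Sum>b\<in>B. \<tau> (f (h b)) *s b)" using B(3) by (intro SL_lc[OF assms(1,2) B(1), symmetric]) auto
    finally have "h (\<Sum>b\<in>B. \<tau> (f (h b)) *s b) = 0" using s by simp
    moreover have "(\<Sum>b\<in>B. \<tau> (f (h b)) *s b) \<in> V1"
      using B(3) by (intro subspace_sum[OF assms(2)] subspace_scale[OF assms(2)]) auto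
    ultimately have z: "(\<Sum>b\<in>B. \<tau> (f (h b)) *s b) = 0" using assms(6) by simp
    obtain b where b: "b \<in> B" "y = h b" using y by blast
    have "\<tau> (f (h b)) = 0" using Bi[rule_format, OF subset_refl B(1), of "\<lambda>b. \<tau> (f (h b))", OF z b(1)] .
    then have "\<sigma> (\<tau> (f (h b))) = 0" using assms(8) by simp
    then show "f y = 0" using b(2) assms(7) by simp
  qed
  moreover have "h ` B \<subseteq> V2" using B(3) SL_in[OF assms(1)] by auto
  moreover have "card (h ` B) = dim V2" using card_image[OF injB] B(5) assms(5) by simp
  ultimately have "V2 \<subseteq> span (h ` B)" using assms(4,5) by (intro D_spans[OF assms(3)]) auto
  also have "span (h ` B) \<subseteq> h ` V1"
    by (rule span_minimal[OF _ SL_image_sub[OF assms(1,2,7)]]) (use B(3) in blast)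
  finally have "V2 \<subseteq> h ` V1" .
  moreover have "h ` V1 \<subseteq> V2" using SL_in[OF assms(1)] by auto
  ultimately show ?thesis by (rule subset_antisym[rotated])
qed

end

locale fvs = vector_space scale for scale :: "'a::alg_closed_field \<Rightarrow> 'b::ab_group_add \<Rightarrow> 'b" (infixr "*s" 75) +
  fixes p :: nat
  assumes prp: "prime p" and chp: "CHAR('a) = p"
begin

lemma pr: "prime CHAR('a)" using prp chp by simp
lemma pp: "p = CHAR('a)" using chp by simp

lemma span_image_sum:
  assumes "finite I" "x \<in> span (g ` I)"
  shows "\<exists>c. x = (\<Sum>i\<in>I. c i *s g i)"
  using assms
proof (induction I arbitrary: x rule: finite_induct)
  case empty
  then show ?case by simp
next
  case (insert i I)
  have "x \<in> span (insert (g i) (g ` I))" using insert.prems by simp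
  then obtain k where k: "x - k *s g i \<in> span (g ` I)" using span_breakdown_eq by blast
  obtain c where c: "x - k *s g i = (\<Sum>j\<in>I. c j *s g j)" using insert.IH[OF k] by blast
  have "(\<Sum>j\<in>insert i I. (c(i := k)) j *s g j) = k *s g i + (\<Sum>j\<in>I. (c(i := k)) j *s g j)"
    using insert.hyps by simp
  also have "(\<Sum>j\<in>I. (c(i := k)) j *s g j) = (\<Sum>j\<in>I. c j *s g j)"
    using insert.hyps by (intro sum.cong) auto
  finally have "(\<Sum>j\<in>insert i I. (c(i := k)) j *s g j) = x" using c by (simp add: algebra_simps)
  then show ?case by (intro exI[where x="c(i := k)"]) (rule sym)
qed

lemma iter_in:
  assumes "\<forall>x\<in>V. F x \<in> V" "v \<in> V"
  shows "(F ^^ j) v \<in> V"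
  by (induction j) (use assms in auto)

lemma cyc_setup:
  assumes sub: "subspace V" "dim V > 0" and F: "\<forall>x\<in>V. F x \<in> V" and v: "v \<in> V" "v \<noteq> 0"
  obtains e c where "(F ^^ Suc e) v = (\<Sum>j<Suc e. c j *s (F ^^ j) v)"
    "(F ^^ e) v \<notin> span ((\<lambda>j. (F ^^ j) v) ` {..<e})"
proof -
  define u where "u = (\<lambda>j. (F ^^ j) v)"
  have uV: "u j \<in> V" for j unfolding u_def by (rule iter_in[OF F v(1)])
  have ex: "\<exists>d. u d \<in> span (u ` {..<d})"
  proof (rule ccontr)
    assume na: "\<not> (\<exists>d. u d \<in> span (u ` {..<d}))"
    have nsp: "u d \<notin> span (u ` {..<d})" for d using na by simp
    have ind: "independent (u ` {..<N}) \<and> card (u ` {..<N}) = N" for N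
    proof (induction N)
      case 0
      then show ?case using independent_empty by simp
    next
      case (Suc N)
      have eq: "u ` {..<Suc N} = insert (u N) (u ` {..<N})" by (simp add: lessThan_Suc)
      have nm: "u N \<notin> u ` {..<N}"
      proof
        assume "u N \<in> u ` {..<N}"
        then have "u N \<in> span (u ` {..<N})" by (rule span_base)
        then show False using nsp[of N] by simp
      qed
      have i1: "independent (insert (u N) (u ` {..<N}))"
        by (rule independent_insertI[OF nsp[of N] conjunct1[OF Suc.IH]])
      have c1: "card (insert (u N) (u ` {..<N})) = Suc N"
        using nm conjunct2[OF Suc.IH] by simp
      show ?case unfolding eq using i1 c1 by (rule conjI)
    qed
    have sV: "u ` {..<Suc (dim V)} \<subseteq> V" using uV by blast
    have "card (u ` {..<Suc (dim V)}) \<le> dim V"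
      using D_indep_le[OF sub sV conjunct1[OF ind]] by simp
    then show False using ind[of "Suc (dim V)"] by simp
  qed
  define d where "d = (LEAST d. u d \<in> span (u ` {..<d}))"
  have d: "u d \<in> span (u ` {..<d})" unfolding d_def using ex by (rule LeastI_ex)
  have "d \<noteq> 0"
  proof
    assume "d = 0"
    then have "u 0 \<in> span {}" using d by simp
    then show False using v(2) by (simp add: u_def)
  qed
  then obtain e where e: "d = Suc e" using not0_implies_Suc by blast
  have ne: "\<not> u e \<in> span (u ` {..<e})"
  proof
    assume "u e \<in> span (u ` {..<e})"
    then have "d \<le> e" unfolding d_def by (rule Least_le)
    then show False using e by simp
  qed
  obtain c where c: "u d = (\<Sum>j<d. c j *s u j)" using span_image_sum[OF finite_lessThan d] by blast
  show ?thesis by (rule that[of e c]) (use c ne e in \<open>simp_all add: u_def\<close>)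
qed

lemma lc_nz:
  assumes "u e \<notin> span (u ` {..<e})" "y e \<noteq> 0"
  shows "(\<Sum>j<Suc e. y j *s u j) \<noteq> 0"
proof
  assume "(\<Sum>j<Suc e. y j *s u j) = 0"
  then have "y e *s u e = - (\<Sum>j<e. y j *s u j)" by (simp add: add_eq_0_iff2 add.commute)
  moreover have "u e = inverse (y e) *s (y e *s u e)" using assms(2) by simp
  ultimately have "u e = inverse (y e) *s (- (\<Sum>j<e. y j *s u j))" by simp
  also have "\<dots> \<in> span (u ` {..<e})" by (intro span_scale span_neg span_sum span_base) auto
  finally show False using assms(1) by simp
qed

lemma cyc_image:
  assumes F: "semilinear_on scale \<sigma> V V F" "subspace V"
    and uV: "\<And>j. u j \<in> V" and uS: "\<And>j. F (u j) = u (Suc j)"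
    and ue: "u (Suc e) = (\<Sum>j<Suc e. c j *s u j)"
  shows "F (\<Sum>j<Suc e. y j *s u j) =
     (\<sigma> (y e) * c 0) *s u 0 + (\<Sum>j<e. (\<sigma> (y j) + \<sigma> (y e) * c (Suc j)) *s u (Suc j))"
proof -
  have "F (\<Sum>j<Suc e. y j *s u j) = (\<Sum>j<Suc e. \<sigma> (y j) *s F (u j))"
    using uV by (intro SL_lc[OF F]) auto
  also have "\<dots> = (\<Sum>j<e. \<sigma> (y j) *s u (Suc j)) + \<sigma> (y e) *s u (Suc e)"
    by (simp add: uS)
  also have "\<sigma> (y e) *s u (Suc e) = (\<sigma> (y e) * c 0) *s u 0 + (\<Sum>j<e. (\<sigma> (y e) * c (Suc j)) *s u (Suc j))"
    unfolding ue sum.lessThan_Suc_shift scale_right_distrib scale_sum_right scale_scale ..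
  finally show ?thesis by (simp add: sum.distrib scale_left_distrib algebra_simps)
qed

lemma cyc_eig:
  assumes F: "semilinear_on scale \<sigma> V V F" "subspace V"
    and uV: "\<And>j. u j \<in> V" and uS: "\<And>j. F (u j) = u (Suc j)"
    and ue: "u (Suc e) = (\<Sum>j<Suc e. c j *s u j)"
    and c0: "\<sigma> (y e) * c 0 = lam * y 0"
    and cS: "\<And>j. j < e \<Longrightarrow> \<sigma> (y j) + \<sigma> (y e) * c (Suc j) = lam * y (Suc j)"
  shows "F (\<Sum>j<Suc e. y j *s u j) = lam *s (\<Sum>j<Suc e. y j *s u j)"
proof -
  have "F (\<Sum>j<Suc e. y j *s u j) = (lam * y 0) *s u 0 + (\<Sum>j<e. (lam * y (Suc j)) *s u (Suc j))"
  proof -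
    have "(\<Sum>j<e. (\<sigma> (y j) + \<sigma> (y e) * c (Suc j)) *s u (Suc j)) = (\<Sum>j<e. (lam * y (Suc j)) *s u (Suc j))"
      by (rule sum.cong) (simp_all add: cS)
    then show ?thesis unfolding cyc_image[OF F uV uS ue] c0 by simp
  qed
  also have "\<dots> = lam *s (\<Sum>j<Suc e. y j *s u j)"
    unfolding sum.lessThan_Suc_shift scale_right_distrib scale_sum_right scale_scale ..
  finally show ?thesis .
qed

end

primrec zp :: "(nat \<Rightarrow> 'a::comm_ring_1) \<Rightarrow> nat \<Rightarrow> nat \<Rightarrow> 'a poly" where
  "zp c e 0 = 1"
| "zp c e (Suc k) = pCons 0 (zp c e k) - [:c (e - k):]"

lemma zp_coeff: "coeff (zp c e k) k = 1"
  by (induction k) (simp_all add: coeff_pCons)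

lemma zp_poly_Suc: "poly (zp c e (Suc k)) x = x * poly (zp c e k) x - c (e - k)"
  by simp

context fvs begin

lemma eig_lin:
  assumes F: "semilinear_on scale (\<lambda>x. x) V V F" and sub: "subspace V" "dim V > 0"
  shows "\<exists>w\<in>V. w \<noteq> 0 \<and> (\<exists>lam. F w = lam *s w)"
proof -
  obtain v where v: "v \<in> V" "v \<noteq> 0" using D_nz[OF sub] by blast
  have FV: "\<forall>x\<in>V. F x \<in> V" using F by (simp add: semilinear_on_def)
  obtain e c where ec: "(F ^^ Suc e) v = (\<Sum>j<Suc e. c j *s (F ^^ j) v)"
    "(F ^^ e) v \<notin> span ((\<lambda>j. (F ^^ j) v) ` {..<e})"
    by (rule cyc_setup[OF sub FV v])
  define u where "u = (\<lambda>j. (F ^^ j) v)"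
  have uV: "\<And>j. u j \<in> V" unfolding u_def by (rule iter_in[OF FV v(1)])
  have uS: "\<And>j. F (u j) = u (Suc j)" unfolding u_def by simp
  have ue: "u (Suc e) = (\<Sum>j<Suc e. c j *s u j)" using ec(1) unfolding u_def .
  have une: "u e \<notin> span (u ` {..<e})" using ec(2) unfolding u_def .
  define P where "P = pCons 0 (zp c e e) - [:c 0:]"
  have "coeff P (Suc e) = 1" unfolding P_def by (simp add: zp_coeff)
  then have "Suc e \<le> degree P" by (intro le_degree) simp
  then have "degree P > 0" by simp
  then obtain lam where lam: "poly P lam = 0" using alg_closed_imp_poly_has_root by blast
  define y where "y = (\<lambda>j. poly (zp c e (e - j)) lam)"
  have ye: "y e = 1" unfolding y_def by simp
  have c0: "y e * c 0 = lam * y 0" using lam unfolding P_def y_def by simp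
  have cS: "y j + y e * c (Suc j) = lam * y (Suc j)" if "j < e" for j
  proof -
    have a: "e - j = Suc (e - Suc j)" using that by simp
    have b: "e - (e - Suc j) = Suc j" using that by simp
    show ?thesis unfolding y_def a zp_poly_Suc b using ye unfolding y_def by simp
  qed
  have Fw: "F (\<Sum>j<Suc e. y j *s u j) = lam *s (\<Sum>j<Suc e. y j *s u j)"
    by (rule cyc_eig[OF F sub(1) uV uS ue, of y lam]) (use c0 cS in simp_all)
  have w0: "(\<Sum>j<Suc e. y j *s u j) \<noteq> 0" by (rule lc_nz[OF une]) (simp add: ye)
  have wV: "(\<Sum>j<Suc e. y j *s u j) \<in> V"
    by (intro subspace_sum[OF sub(1)] subspace_scale[OF sub(1)] uV)
  show ?thesis using Fw w0 wV by blast
qed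

lemma eig_pos:
  assumes F: "semilinear_on scale (\<lambda>x. x ^ (p ^ k)) V V F" and k: "k > 0"
    and sub: "subspace V" "dim V > 0" and inj: "\<forall>x\<in>V. F x = 0 \<longrightarrow> x = 0"
  shows "\<exists>w\<in>V. w \<noteq> 0 \<and> F w = w"
proof -
  define Q where "Q = p ^ k"
  have p2: "p \<ge> 2" using prp by (rule prime_ge_2_nat)
  have "p ^ 1 \<le> p ^ k" using k p2 by (intro power_increasing) simp_all
  then have "p \<le> Q" unfolding Q_def by simp
  then have Q2: "Q \<ge> 2" using p2 by simp
  have QC: "Q = CHAR('a) ^ k" unfolding Q_def using pp by simp
  note F' = F[folded Q_def]
  obtain v where v: "v \<in> V" "v \<noteq> 0" using D_nz[OF sub] by blast
  have FV: "\<forall>x\<in>V. F x \<in> V" using F by (simp add: semilinear_on_def)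
  obtain e c where ec: "(F ^^ Suc e) v = (\<Sum>j<Suc e. c j *s (F ^^ j) v)"
    "(F ^^ e) v \<notin> span ((\<lambda>j. (F ^^ j) v) ` {..<e})"
    by (rule cyc_setup[OF sub FV v])
  define u where "u = (\<lambda>j. (F ^^ j) v)"
  have uV: "\<And>j. u j \<in> V" unfolding u_def by (rule iter_in[OF FV v(1)])
  have uS: "\<And>j. F (u j) = u (Suc j)" unfolding u_def by simp
  have ue: "u (Suc e) = (\<Sum>j<Suc e. c j *s u j)" using ec(1) unfolding u_def .
  have une: "u e \<notin> span (u ` {..<e})" using ec(2) unfolding u_def .
  have c0nz: "c 0 \<noteq> 0"
  proof
    assume c0: "c 0 = 0"
    have "\<forall>j. \<exists>x. x ^ Q = c (Suc j)" unfolding QC using pw_surj[OF pr] by blast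
    then obtain t where t: "\<forall>j. t j ^ Q = c (Suc j)" by (rule choice[THEN exE])
    have "u (Suc e) = c 0 *s u 0 + (\<Sum>j<e. c (Suc j) *s u (Suc j))"
      unfolding ue sum.lessThan_Suc_shift ..
    also have "\<dots> = (\<Sum>j<e. (t j ^ Q) *s F (u j))" using c0 t uS by simp
    also have "\<dots> = F (\<Sum>j<e. t j *s u j)"
      by (rule SL_lc[OF F' sub(1), symmetric]) (simp_all add: uV)
    finally have "F (u e) = F (\<Sum>j<e. t j *s u j)" using uS by simp
    moreover have zV: "(\<Sum>j<e. t j *s u j) \<in> V"
      by (intro subspace_sum[OF sub(1)] subspace_scale[OF sub(1)] uV)
    ultimately have "u e = (\<Sum>j<e. t j *s u j)"
      by (intro SL_inj0[OF F' sub(1) inj uV zV])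
    also have "\<dots> \<in> span (u ` {..<e})" by (intro span_sum span_scale span_base) auto
    finally show False using une by simp
  qed
  define a where "a = (\<lambda>i. c i ^ (Q ^ (e - i)))"
  define E where "E = (\<lambda>i. Q ^ Suc (e - i))"
  have E1: "E i \<ge> 2" for i
  proof -
    have "1 \<le> Q ^ (e - i)" using Q2 by simp
    then have m: "Q * 1 \<le> Q * Q ^ (e - i)" by (rule mult_le_mono2)
    show ?thesis unfolding E_def power_Suc using Q2 m by linarith
  qed
  define R where "R = (\<Sum>i\<le>e. monom (a i) (E i - 1)) - 1"
  have Einj: "E i - 1 = E 0 - 1 \<longleftrightarrow> i = 0" if "i \<le> e" for i
  proof
    assume "E i - 1 = E 0 - 1"
    then have "E i = E 0" using E1[of i] E1[of 0] by simp
    then have "Suc (e - i) = Suc (e - 0)" unfolding E_def using Q2 by (simp add: power_inject_exp)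
    then show "i = 0" using that by simp
  qed simp
  have "coeff R (E 0 - 1) = (\<Sum>i\<le>e. if E i - 1 = E 0 - 1 then a i else 0) - coeff 1 (E 0 - 1)"
    unfolding R_def by (simp add: coeff_sum coeff_monom)
  also have "(\<Sum>i\<le>e. if E i - 1 = E 0 - 1 then a i else 0) = (\<Sum>i\<le>e. if i = 0 then a i else 0)"
  proof (rule sum.cong)
    fix i assume "i \<in> {..e}"
    then have "(E i - 1 = E 0 - 1) = (i = 0)" using Einj by simp
    then show "(if E i - 1 = E 0 - 1 then a i else 0) = (if i = 0 then a i else 0)" by (simp only:)
  qed simp
  also have "\<dots> = a 0" by simp
  also have "coeff (1::'a poly) (E 0 - 1) = 0" using E1[of 0] by (simp add: coeff_1)
  finally have cR: "coeff R (E 0 - 1) = a 0" by simp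
  have a0: "a 0 \<noteq> 0" unfolding a_def using c0nz by simp
  have "E 0 - 1 \<le> degree R" using cR a0 by (intro le_degree) simp
  then have "degree R > 0" using E1[of 0] by simp
  then obtain r where r: "poly R r = 0" using alg_closed_imp_poly_has_root by blast
  have "poly R 0 = -1"
  proof -
    have "poly R 0 = (\<Sum>i\<le>e. a i * 0 ^ (E i - 1)) - 1" unfolding R_def by (simp add: poly_sum poly_monom)
    also have "(\<Sum>i\<le>e. a i * (0::'a) ^ (E i - 1)) = 0"
    proof (rule sum.neutral, rule ballI)
      fix i assume "i \<in> {..e}"
      have "E i - 1 \<noteq> 0" using E1[of i] by simp
      then show "a i * (0::'a) ^ (E i - 1) = 0" by simp
    qed
    finally show ?thesis by simp
  qed
  then have r0: "r \<noteq> 0" using r by auto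
  have s1: "(\<Sum>i\<le>e. a i * r ^ (E i - 1)) = 1" using r unfolding R_def by (simp add: poly_sum poly_monom)
  have me: "r * (\<Sum>i\<le>e. a i * r ^ (E i - 1)) = (\<Sum>i\<le>e. a i * r ^ E i)"
    unfolding sum_distrib_left
  proof (rule sum.cong)
    fix i assume "i \<in> {..e}"
    have "r * r ^ (E i - 1) = r ^ E i" using E1[of i] by (simp add: power_eq_if)
    then show "r * (a i * r ^ (E i - 1)) = a i * r ^ E i" by (simp add: algebra_simps)
  qed simp
  have rr: "(\<Sum>i\<le>e. a i * r ^ E i) = r"
  proof -
    have "(\<Sum>i\<le>e. a i * r ^ E i) = r * (\<Sum>i\<le>e. a i * r ^ (E i - 1))" by (rule me[symmetric])
    also have "\<dots> = r * 1" by (simp only: s1)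
    finally show ?thesis by simp
  qed
  define y where "y = (\<lambda>j. \<Sum>i\<le>j. c i ^ (Q ^ (j - i)) * r ^ (Q ^ Suc (j - i)))"
  have ye: "y e = r" using rr unfolding y_def a_def E_def .
  have yQ: "y j ^ Q = (\<Sum>i\<le>j. c i ^ (Q ^ (Suc j - i)) * r ^ (Q ^ Suc (Suc j - i)))" for j
  proof -
    have "y j ^ Q = (\<Sum>i\<le>j. (c i ^ (Q ^ (j - i)) * r ^ (Q ^ Suc (j - i))) ^ Q)"
      unfolding y_def by (rule freshmans_dream_sum'[OF pr QC])
    also have "\<dots> = (\<Sum>i\<le>j. c i ^ (Q ^ (Suc j - i)) * r ^ (Q ^ Suc (Suc j - i)))"
    proof (rule sum.cong)
      fix i assume "i \<in> {..j}"
      then have "Suc j - i = Suc (j - i)" by simp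
      then show "(c i ^ (Q ^ (j - i)) * r ^ (Q ^ Suc (j - i))) ^ Q =
                 c i ^ (Q ^ (Suc j - i)) * r ^ (Q ^ Suc (Suc j - i))"
        by (simp add: power_mult_distrib power_mult[symmetric] mult.commute)
    qed simp
    finally show ?thesis .
  qed
  have c0: "y e ^ Q * c 0 = 1 * y 0" unfolding ye by (simp add: y_def mult.commute)
  have cS: "y j ^ Q + y e ^ Q * c (Suc j) = 1 * y (Suc j)" for j
  proof -
    have "y (Suc j) = (\<Sum>i\<le>j. c i ^ (Q ^ (Suc j - i)) * r ^ (Q ^ Suc (Suc j - i))) + c (Suc j) * r ^ Q"
      unfolding y_def by simp
    then show ?thesis unfolding yQ ye by (simp add: mult.commute)
  qed
  have Fw: "F (\<Sum>j<Suc e. y j *s u j) = 1 *s (\<Sum>j<Suc e. y j *s u j)"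
    by (rule cyc_eig[OF F' sub(1) uV uS ue, of y 1]) (use c0 cS in simp_all)
  have w0: "(\<Sum>j<Suc e. y j *s u j) \<noteq> 0" by (rule lc_nz[OF une]) (simp add: ye r0)
  have wV: "(\<Sum>j<Suc e. y j *s u j) \<in> V"
    by (intro subspace_sum[OF sub(1)] subspace_scale[OF sub(1)] uV)
  show ?thesis using Fw w0 wV by auto
qed

lemma frob_fun_nonneg: "0 \<le> n \<Longrightarrow> frob_pow p n = (\<lambda>x::'a. x ^ (p ^ nat n))"
  by (rule ext) (simp add: frob_nonneg)

lemma eig:
  assumes F: "semilinear_on scale (frob_pow p n) V V F" and sub: "subspace V" "dim V > 0"
  shows "\<exists>w\<in>V. w \<noteq> 0 \<and> (\<exists>lam. F w = lam *s w)"
proof (cases "\<exists>x\<in>V. x \<noteq> 0 \<and> F x = 0")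
  case True
  then obtain x where "x \<in> V" "x \<noteq> 0" "F x = 0" by blast
  then show ?thesis by (intro bexI[of _ x]) (auto intro: exI[of _ 0])
next
  case False
  then have inj: "\<forall>x\<in>V. F x = 0 \<longrightarrow> x = 0" by blast
  consider (pos) "n > 0" | (zero) "n = 0" | (neg) "n < 0" by linarith
  then show ?thesis
  proof cases
    case pos
    have F2: "semilinear_on scale (\<lambda>x. x ^ (p ^ nat n)) V V F" using F frob_fun_nonneg[of n] pos by simp
    obtain w where "w \<in> V" "w \<noteq> 0" "F w = w" using eig_pos[OF F2 _ sub inj] pos by auto
    then show ?thesis by (intro bexI[of _ w]) (auto intro: exI[of _ 1])
  next
    case zero
    have F2: "semilinear_on scale (\<lambda>x. x) V V F" using F zero by (simp add: frob_pow_def)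
    show ?thesis by (rule eig_lin[OF F2 sub])
  next
    case neg
    have st: "frob_pow p n (frob_pow p (-n) c) = c" for c :: 'a using frob_inv1(2)[OF pr pp] .
    have s0: "frob_pow p n (0::'a) = 0" by (rule frob_0[OF pr pp])
    have im: "F ` V = V" by (rule D_inj_surj[OF F sub(1) sub(1) sub(2) refl inj st s0])
    have injo: "inj_on F V" by (rule inj_onI) (rule SL_inj0[OF F sub(1) inj])
    have bij: "bij_betw F V V" using injo im by (simp add: bij_betw_def)
    define G where "G = inv_into V F"
    have G: "semilinear_on scale (frob_pow p (-n)) V V G" unfolding G_def by (rule SL_inv[OF F bij st sub(1)])
    have G2: "semilinear_on scale (\<lambda>x. x ^ (p ^ nat (-n))) V V G" using G frob_fun_nonneg[of "-n"] neg by simp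
    have FG: "F (G y) = y" if "y \<in> V" for y unfolding G_def using that im by (metis f_inv_into_f)
    have Gi: "\<forall>y\<in>V. G y = 0 \<longrightarrow> y = 0"
    proof (intro ballI impI)
      fix y assume "y \<in> V" "G y = 0"
      then have "y = F 0" using FG by metis
      then show "y = 0" using SL_0[OF F sub(1)] by simp
    qed
    obtain w where w: "w \<in> V" "w \<noteq> 0" "G w = w" using eig_pos[OF G2 _ sub Gi] neg by auto
    have "F w = w" using FG[OF w(1)] w(3) by simp
    then show ?thesis using w by (intro bexI[of _ w]) (auto intro: exI[of _ 1])
  qed
qed

end

definition cyc :: "nat set \<Rightarrow> (nat \<Rightarrow> nat) \<Rightarrow> (nat \<Rightarrow> nat) \<Rightarrow> bool" where
  "cyc V nx pv \<longleftrightarrow> (\<forall>u\<in>V. nx u \<in> V \<and> pv u \<in> V \<and> pv (nx u) = u \<and> nx (pv u) = u)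
      \<and> (\<forall>u\<in>V. \<forall>w\<in>V. \<exists>k. (nx ^^ k) u = w)"

lemma cyc_nx: "cyc V nx pv \<Longrightarrow> u \<in> V \<Longrightarrow> nx u \<in> V" by (simp add: cyc_def)
lemma cyc_pv: "cyc V nx pv \<Longrightarrow> u \<in> V \<Longrightarrow> pv u \<in> V" by (simp add: cyc_def)
lemma cyc_pn: "cyc V nx pv \<Longrightarrow> u \<in> V \<Longrightarrow> pv (nx u) = u" by (simp add: cyc_def)
lemma cyc_np: "cyc V nx pv \<Longrightarrow> u \<in> V \<Longrightarrow> nx (pv u) = u" by (simp add: cyc_def)
lemma cyc_conn: "cyc V nx pv \<Longrightarrow> u \<in> V \<Longrightarrow> w \<in> V \<Longrightarrow> \<exists>k. (nx ^^ k) u = w" by (simp add: cyc_def)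

lemma cyc_iter: "cyc V nx pv \<Longrightarrow> u \<in> V \<Longrightarrow> (nx ^^ k) u \<in> V"
  by (induction k) (simp_all add: cyc_nx)

lemma cyc_back: "cyc V nx pv \<Longrightarrow> u \<in> V \<Longrightarrow> (pv ^^ k) ((nx ^^ k) u) = u"
proof (induction k)
  case 0 then show ?case by simp
next
  case (Suc k)
  have a: "(pv ^^ Suc k) y = (pv ^^ k) (pv y)" for y by (simp only: funpow_Suc_right o_apply)
  have "(pv ^^ Suc k) ((nx ^^ Suc k) u) = (pv ^^ k) (pv (nx ((nx ^^ k) u)))"
    unfolding a by simp
  also have "pv (nx ((nx ^^ k) u)) = (nx ^^ k) u" using cyc_pn[OF Suc.prems(1) cyc_iter[OF Suc.prems]] .
  finally show ?case using Suc by simp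
qed

lemma cyc_rev: "cyc V nx pv \<Longrightarrow> cyc V pv nx"
proof -
  assume c: "cyc V nx pv"
  have "\<exists>k. (pv ^^ k) u = w" if uw: "u \<in> V" "w \<in> V" for u w
  proof -
    obtain k where "(nx ^^ k) w = u" using cyc_conn[OF c uw(2,1)] by blast
    then show ?thesis using cyc_back[OF c uw(2), of k] by blast
  qed
  then show ?thesis using c unfolding cyc_def by blast
qed

definition lk :: "(nat \<Rightarrow> nat) \<Rightarrow> nat \<Rightarrow> nat \<Rightarrow> nat" where
  "lk nx v u = (LEAST k. (nx ^^ k) v = u)"

lemma lk_eq: "cyc V nx pv \<Longrightarrow> v \<in> V \<Longrightarrow> u \<in> V \<Longrightarrow> (nx ^^ lk nx v u) v = u"
  unfolding lk_def using cyc_conn by (metis (mono_tags, lifting) LeastI_ex)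

lemma lk_step:
  assumes c: "cyc V nx pv" and v: "v \<in> V" and u: "u \<in> V" "u \<noteq> v"
  shows "lk nx v u = Suc (lk nx v (pv u))"
proof -
  have t: "pv u \<in> V" by (rule cyc_pv[OF c u(1)])
  define kt where "kt = lk nx v (pv u)"
  have kt: "(nx ^^ kt) v = pv u" unfolding kt_def by (rule lk_eq[OF c v t])
  have "(nx ^^ Suc kt) v = u" using kt cyc_np[OF c u(1)] by simp
  then have le: "lk nx v u \<le> Suc kt" unfolding lk_def by (rule Least_le)
  have lu: "(nx ^^ lk nx v u) v = u" by (rule lk_eq[OF c v u(1)])
  have "lk nx v u \<noteq> 0" using lu u(2) by (metis funpow_0)
  then obtain i where i: "lk nx v u = Suc i" using not0_implies_Suc by blast
  have "nx ((nx ^^ i) v) = u" using lu i by simp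
  then have "pv u = (nx ^^ i) v" using cyc_pn[OF c cyc_iter[OF c v]] by metis
  then have "kt \<le> i" unfolding kt_def lk_def by (intro Least_le) simp
  then show ?thesis using le i kt_def by simp
qed


context fvs begin

lemma frob_fun_comp: "(\<lambda>c::'a. frob_pow p a (frob_pow p b c)) = frob_pow p (a + b)"
  by (rule ext) (rule frob_comp[OF pr pp])

lemma fwd_path:
  assumes c: "cyc V nx pv"
    and K: "\<forall>u\<in>V. subspace (K u) \<and> dim (K u) > 0"
    and g: "\<forall>u\<in>V. semilinear_on scale (frob_pow p (a u)) (K (pv u)) (K u) (g u)"
    and j: "j \<in> V" "\<forall>y\<in>K (pv j). g j y = 0"
  shows "\<exists>x. \<forall>u\<in>V. x u \<in> K u \<and> x u \<noteq> 0 \<and> g u (x (pv u)) \<in> span {x u}"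
proof -
  have "\<forall>u\<in>V. \<exists>z. z \<in> K u \<and> z \<noteq> 0" using K D_nz by blast
  then obtain nzf where nzf: "\<forall>u\<in>V. nzf u \<in> K u \<and> nzf u \<noteq> 0" by metis
  define y where "y = rec_nat (nzf j) (\<lambda>k yk. if g ((nx ^^ Suc k) j) yk \<noteq> 0
                      then g ((nx ^^ Suc k) j) yk else nzf ((nx ^^ Suc k) j))"
  have y0: "y 0 = nzf j" unfolding y_def by simp
  have yS: "y (Suc k) = (if g ((nx ^^ Suc k) j) (y k) \<noteq> 0
                      then g ((nx ^^ Suc k) j) (y k) else nzf ((nx ^^ Suc k) j))" for k
    unfolding y_def by simp
  have yK: "y k \<in> K ((nx ^^ k) j) \<and> y k \<noteq> 0" for k
  proof (induction k)
    case 0 then show ?case using y0 nzf j(1) by simp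
  next
    case (Suc k)
    define w where "w = (nx ^^ Suc k) j"
    have wV: "w \<in> V" unfolding w_def by (rule cyc_iter[OF c j(1)])
    have pw: "pv w = (nx ^^ k) j" unfolding w_def using cyc_pn[OF c cyc_iter[OF c j(1)]] by simp
    have "g w (y k) \<in> K w" using g wV Suc.IH pw by (simp add: semilinear_on_def)
    then show ?case using yS[of k] nzf wV unfolding w_def[symmetric] by auto
  qed
  define x where "x = (\<lambda>u. y (lk nx j u))"
  have xK: "x u \<in> K u \<and> x u \<noteq> 0" if "u \<in> V" for u
    using yK[of "lk nx j u"] lk_eq[OF c j(1) that] unfolding x_def by simp
  have "g u (x (pv u)) \<in> span {x u}" if u: "u \<in> V" for u
  proof (cases "u = j")
    case True
    have "x (pv j) \<in> K (pv j)" using xK cyc_pv[OF c j(1)] by blast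
    then show ?thesis using True j(2) span_zero by simp
  next
    case False
    define kt where "kt = lk nx j (pv u)"
    have st: "lk nx j u = Suc kt" unfolding kt_def by (rule lk_step[OF c j(1) u False])
    have w: "(nx ^^ Suc kt) j = u" using lk_eq[OF c j(1) u] st by simp
    have xp: "x (pv u) = y kt" unfolding x_def kt_def ..
    have "x u = (if g u (y kt) \<noteq> 0 then g u (y kt) else nzf u)"
      unfolding x_def st yS w ..
    then have "x u = (if g u (x (pv u)) \<noteq> 0 then g u (x (pv u)) else nzf u)" unfolding xp .
    then show ?thesis using span_base[of "x u" "{x u}"] span_zero[of "{x u}"] by (cases "g u (x (pv u)) = 0") auto
  qed
  then show ?thesis using xK by blast
qed

lemma fwd_surj:
  assumes c: "cyc V nx pv" and v: "v \<in> V"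
    and K: "\<forall>u\<in>V. subspace (K u) \<and> dim (K u) > 0"
    and g: "\<forall>u\<in>V. semilinear_on scale (frob_pow p (a u)) (K (pv u)) (K u) (g u)"
    and sj: "\<forall>u\<in>V. g u ` K (pv u) = K u"
  shows "\<exists>x. \<forall>u\<in>V. x u \<in> K u \<and> x u \<noteq> 0 \<and> g u (x (pv u)) \<in> span {x u}"
proof -
  have ex: "\<exists>n. 0 < n \<and> (nx ^^ n) v = v"
  proof -
    obtain k where k: "(nx ^^ k) (nx v) = v" using cyc_conn[OF c cyc_nx[OF c v] v] by blast
    have "(nx ^^ Suc k) v = (nx ^^ k) (nx v)" by (simp only: funpow_Suc_right o_apply)
    then show ?thesis using k by (intro exI[of _ "Suc k"]) simp
  qed
  define n where "n = (LEAST n. 0 < n \<and> (nx ^^ n) v = v)"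
  have np: "0 < n \<and> (nx ^^ n) v = v" unfolding n_def using ex by (rule LeastI_ex)
  define G where "G = rec_nat (\<lambda>x. x) (\<lambda>k Gk x. g ((nx ^^ Suc k) v) (Gk x))"
  define S where "S = rec_nat 0 (\<lambda>k Sk. a ((nx ^^ Suc k) v) + Sk)"
  have G0: "G 0 = (\<lambda>x. x)" unfolding G_def by simp
  have GS: "G (Suc k) = (\<lambda>x. g ((nx ^^ Suc k) v) (G k x))" for k unfolding G_def by simp
  have S0: "S 0 = 0" unfolding S_def by simp
  have SS: "S (Suc k) = a ((nx ^^ Suc k) v) + S k" for k unfolding S_def by simp
  have pvS: "pv ((nx ^^ Suc k) v) = (nx ^^ k) v" for k using cyc_pn[OF c cyc_iter[OF c v]] by simp
  have GP: "semilinear_on scale (frob_pow p (S k)) (K v) (K ((nx ^^ k) v)) (G k) \<and> G k ` K v = K ((nx ^^ k) v)" for k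
  proof (induction k)
    case 0
    show ?case unfolding G0 S0 by (simp add: semilinear_on_def)
  next
    case (Suc k)
    define w where "w = (nx ^^ Suc k) v"
    have wV: "w \<in> V" unfolding w_def by (rule cyc_iter[OF c v])
    have gw0: "semilinear_on scale (frob_pow p (a w)) (K (pv w)) (K w) (g w)"
      using g wV by blast
    have pw: "pv w = (nx ^^ k) v" unfolding w_def by (rule pvS)
    have gw: "semilinear_on scale (frob_pow p (a w)) (K ((nx ^^ k) v)) (K w) (g w)"
      using gw0 unfolding pw .
    have "semilinear_on scale (\<lambda>c. frob_pow p (a w) (frob_pow p (S k) c)) (K v) (K w) (\<lambda>x. g w (G k x))"
      by (rule SL_comp[OF conjunct1[OF Suc.IH] gw])
    then have s1: "semilinear_on scale (frob_pow p (S (Suc k))) (K v) (K w) (G (Suc k))"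
      unfolding frob_fun_comp GS SS w_def .
    have "G (Suc k) ` K v = g w ` (G k ` K v)" unfolding GS w_def by (simp add: image_image)
    also have "\<dots> = g w ` K (pv w)" using conjunct2[OF Suc.IH] pvS[of k] unfolding w_def by simp
    also have "\<dots> = K w" using sj wV by simp
    finally show ?case using s1 unfolding w_def by simp
  qed
  have Kv: "subspace (K v)" "dim (K v) > 0" using K v by auto
  have Phi: "semilinear_on scale (frob_pow p (S n)) (K v) (K v) (G n)" using conjunct1[OF GP[of n]] np by simp
  have Phis: "G n ` K v = K v" using conjunct2[OF GP[of n]] np by simp
  have Phii: "\<forall>x\<in>K v. G n x = 0 \<longrightarrow> x = 0" using D_surj_inj[OF Phi Kv Phis] by blast
  obtain w lam where w: "w \<in> K v" "w \<noteq> 0" "G n w = lam *s w" using eig[OF Phi Kv] by blast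
  have lam0: "lam \<noteq> 0"
  proof
    assume "lam = 0"
    then have "G n w = 0" using w(3) by simp
    then show False using Phii w(1,2) by blast
  qed
  have gz: "G (j + d) w = 0" if "G j w = 0" for j d
  proof (induction d)
    case 0 then show ?case using that by simp
  next
    case (Suc d)
    define z where "z = (nx ^^ Suc (j + d)) v"
    have zV: "z \<in> V" unfolding z_def by (rule cyc_iter[OF c v])
    have gzs: "semilinear_on scale (frob_pow p (a z)) (K (pv z)) (K z) (g z)" using g zV by simp
    have "pv z \<in> V" by (rule cyc_pv[OF c zV])
    then have "g z 0 = 0" using SL_0[OF gzs] K by simp
    then show ?case using Suc.IH unfolding z_def by (simp add: GS)
  qed
  have Gadd: "G (k + n) x = G k (G n x)" for k x
  proof (induction k)
    case 0 then show ?case by (simp add: G0)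
  next
    case (Suc k)
    have sk: "Suc (k + n) = Suc k + n" by simp
    have "(nx ^^ Suc (k + n)) v = (nx ^^ Suc k) ((nx ^^ n) v)"
      by (simp only: sk funpow_add o_apply)
    also have "\<dots> = (nx ^^ Suc k) v" using np by simp
    finally have e: "(nx ^^ Suc (k + n)) v = (nx ^^ Suc k) v" .
    show ?case using Suc.IH unfolding add_Suc GS e by simp
  qed
  have Gnz: "G k w \<noteq> 0" for k
  proof (induction k rule: less_induct)
    case (less k)
    show ?case
    proof (cases "k < n")
      case True
      show ?thesis
      proof
        assume "G k w = 0"
        then have "G (k + (n - k)) w = 0" by (rule gz)
        then have "G n w = 0" using True by simp
        then show False using w(3) lam0 w(2) by simp
      qed
    next
      case False
      then have kk: "k = (k - n) + n" by simp
      have "G k w = G (k - n) (lam *s w)" using Gadd[of "k - n" w] kk w(3) by simp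
      also have "\<dots> = frob_pow p (S (k - n)) lam *s G (k - n) w"
        using SL_scale[OF conjunct1[OF GP[of "k - n"]] w(1)] .
      also have "\<dots> \<noteq> 0" using less.IH[of "k - n"] np lam0 frob_eq0_iff[OF pr pp] False by simp
      finally show ?thesis .
    qed
  qed
  define x where "x = (\<lambda>u. G (lk nx v u) w)"
  have xK: "x u \<in> K u \<and> x u \<noteq> 0" if "u \<in> V" for u
  proof -
    have "G (lk nx v u) w \<in> K ((nx ^^ lk nx v u) v)" using SL_in[OF conjunct1[OF GP] w(1)] .
    then show ?thesis unfolding x_def using lk_eq[OF c v that] Gnz by simp
  qed
  have lvv: "lk nx v v = 0" unfolding lk_def by (rule Least_eq_0) simp
  have "g u (x (pv u)) \<in> span {x u}" if u: "u \<in> V" for u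
  proof (cases "u = v")
    case False
    define kt where "kt = lk nx v (pv u)"
    have st: "lk nx v u = Suc kt" unfolding kt_def by (rule lk_step[OF c v u False])
    have e: "(nx ^^ Suc kt) v = u" using lk_eq[OF c v u] st by simp
    have xp: "x (pv u) = G kt w" unfolding x_def kt_def ..
    have "x u = g u (G kt w)" unfolding x_def st GS e ..
    then have "x u = g u (x (pv u))" unfolding xp .
    then show ?thesis using span_base[of "x u" "{x u}"] by simp
  next
    case True
    have pvv: "pv v \<in> V" by (rule cyc_pv[OF c v])
    obtain m where m: "n = Suc m" using np not0_implies_Suc by blast
    have "nx ((nx ^^ m) v) = v" using np m by simp
    then have em: "(nx ^^ m) v = pv v" using cyc_pn[OF c cyc_iter[OF c v], of m] by metis
    have le: "lk nx v (pv v) \<le> m" unfolding lk_def by (rule Least_le) (rule em)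
    have ge: "\<not> lk nx v (pv v) < m"
    proof
      assume lt: "lk nx v (pv v) < m"
      have "(nx ^^ lk nx v (pv v)) v = pv v" by (rule lk_eq[OF c v pvv])
      then have "(nx ^^ Suc (lk nx v (pv v))) v = v" using cyc_np[OF c v] by simp
      then have "n \<le> Suc (lk nx v (pv v))" unfolding n_def by (intro Least_le) simp
      then show False using lt m by simp
    qed
    have lm: "lk nx v (pv v) = m" using le ge by simp
    have "g v (x (pv v)) = G n w" unfolding x_def lm m GS using np m by simp
    also have "\<dots> = lam *s x v" using w(3) unfolding x_def lvv G0 by simp
    finally show ?thesis using True span_scale[OF span_base[of "x v" "{x v}"]] by simp
  qed
  then show ?thesis using xK by blast
qed

lemma fwd:
  assumes c: "cyc V nx pv" and fin: "finite V" and v: "v \<in> V"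
    and K: "\<forall>u\<in>V. subspace (K u) \<and> dim (K u) > 0"
    and g: "\<forall>u\<in>V. semilinear_on scale (frob_pow p (a u)) (K (pv u)) (K u) (g u)"
  shows "\<exists>x. \<forall>u\<in>V. x u \<in> K u \<and> x u \<noteq> 0 \<and> g u (x (pv u)) \<in> span {x u}"
  using K g
proof (induction "\<Sum>u\<in>V. dim (K u)" arbitrary: K rule: less_induct)
  case less
  show ?case
  proof (cases "\<exists>j\<in>V. \<forall>y\<in>K (pv j). g j y = 0")
    case True
    then obtain j where "j \<in> V" "\<forall>y\<in>K (pv j). g j y = 0" by blast
    then show ?thesis by (rule fwd_path[OF c less.prems])
  next
    case np: False
    show ?thesis
    proof (cases "\<forall>u\<in>V. g u ` K (pv u) = K u")
      case True
      then show ?thesis by (rule fwd_surj[OF c v less.prems])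
    next
      case False
      then obtain j where j: "j \<in> V" "g j ` K (pv j) \<noteq> K j" by blast
      define U where "U = (\<lambda>u. g u ` K (pv u))"
      have Up: "subspace (U u) \<and> dim (U u) > 0 \<and> dim (U u) \<le> dim (K u) \<and> (dim (U u) = dim (K u) \<longrightarrow> U u = K u)"
        if u: "u \<in> V" for u
      proof -
        have pu: "pv u \<in> V" by (rule cyc_pv[OF c u])
        have gu: "semilinear_on scale (frob_pow p (a u)) (K (pv u)) (K u) (g u)" using less.prems(2) u by blast
        have Kp: "subspace (K (pv u))" using less.prems(1) pu by blast
        have Ku: "subspace (K u)" "dim (K u) > 0" using less.prems(1) u by auto
        have sU: "subspace (U u)" unfolding U_def
          by (rule SL_image_sub[OF gu Kp, of "frob_pow p (- a u)"]) (rule frob_inv1(2)[OF pr pp])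
        have UK: "U u \<subseteq> K u" unfolding U_def using SL_in[OF gu] by blast
        obtain y where y: "y \<in> K (pv u)" "g u y \<noteq> 0" using np u by blast
        have yU: "g u y \<in> U u" unfolding U_def using y(1) by blast
        show ?thesis using D_sub[OF Ku sU UK yU y(2)] sU by blast
      qed
      have lt: "(\<Sum>u\<in>V. dim (U u)) < (\<Sum>u\<in>V. dim (K u))"
      proof (rule sum_strict_mono_ex1[OF fin])
        show "\<forall>u\<in>V. dim (U u) \<le> dim (K u)" using Up by blast
        have "dim (U j) \<noteq> dim (K j)" using Up[OF j(1)] j(2) unfolding U_def by blast
        then show "\<exists>u\<in>V. dim (U u) < dim (K u)" using Up[OF j(1)] j(1) by (intro bexI[of _ j]) auto
      qed
      have UK: "\<forall>u\<in>V. subspace (U u) \<and> dim (U u) > 0" using Up by blast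
      have gU: "\<forall>u\<in>V. semilinear_on scale (frob_pow p (a u)) (U (pv u)) (U u) (g u)"
      proof
        fix u assume u: "u \<in> V"
        have gu: "semilinear_on scale (frob_pow p (a u)) (K (pv u)) (K u) (g u)" using less.prems(2) u by blast
        have pu: "pv u \<in> V" by (rule cyc_pv[OF c u])
        have sub: "U (pv u) \<subseteq> K (pv u)" unfolding U_def using SL_in less.prems(2) pu by blast
        have "g u y \<in> U u" if "y \<in> U (pv u)" for y
        proof -
          have "y \<in> K (pv u)" using that sub by blast
          then show ?thesis unfolding U_def by blast
        qed
        then show "semilinear_on scale (frob_pow p (a u)) (U (pv u)) (U u) (g u)"
          by (rule SL_mono[OF gu sub])
      qed
      obtain x where x: "\<forall>u\<in>V. x u \<in> U u \<and> x u \<noteq> 0 \<and> g u (x (pv u)) \<in> span {x u}"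
        using less.hyps[OF lt UK gU] by blast
      have "\<forall>u\<in>V. x u \<in> K u"
      proof
        fix u assume u: "u \<in> V"
        have gu: "semilinear_on scale (frob_pow p (a u)) (K (pv u)) (K u) (g u)" using less.prems(2) u by blast
        have "U u \<subseteq> K u" unfolding U_def using SL_in[OF gu] by blast
        then show "x u \<in> K u" using x u by blast
      qed
      then show ?thesis using x by blast
    qed
  qed
qed

end

lemma cyc_contract:
  assumes c: "cyc V nx pv" and x0: "x0 \<in> V" and ne: "pv x0 \<noteq> x0"
  shows "cyc (V - {x0}) (\<lambda>u. if u = pv x0 then nx x0 else nx u) (\<lambda>u. if u = nx x0 then pv x0 else pv u)"
proof -
  define y0 where "y0 = pv x0"
  define z0 where "z0 = nx x0"
  define nx' where "nx' = (\<lambda>u. if u = y0 then z0 else nx u)"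
  define pv' where "pv' = (\<lambda>u. if u = z0 then y0 else pv u)"
  have y0V: "y0 \<in> V" unfolding y0_def by (rule cyc_pv[OF c x0])
  have z0V: "z0 \<in> V" unfolding z0_def by (rule cyc_nx[OF c x0])
  have ny0: "nx y0 = x0" unfolding y0_def by (rule cyc_np[OF c x0])
  have pz0: "pv z0 = x0" unfolding z0_def by (rule cyc_pn[OF c x0])
  have y0x: "y0 \<noteq> x0" using ne unfolding y0_def .
  have z0x: "z0 \<noteq> x0" using ne pz0 by auto
  have A: "nx' u \<in> V - {x0} \<and> pv' u \<in> V - {x0} \<and> pv' (nx' u) = u \<and> nx' (pv' u) = u" if u: "u \<in> V - {x0}" for u
  proof -
    have uV: "u \<in> V" "u \<noteq> x0" using u by auto
    have "nx' u \<in> V - {x0}"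
    proof (cases "u = y0")
      case True then show ?thesis using z0V z0x unfolding nx'_def by simp
    next
      case False
      have "nx u \<noteq> x0" using cyc_pn[OF c uV(1)] False unfolding y0_def by auto
      then show ?thesis using cyc_nx[OF c uV(1)] False unfolding nx'_def by simp
    qed
    moreover have "pv' u \<in> V - {x0}"
    proof (cases "u = z0")
      case True then show ?thesis using y0V y0x unfolding pv'_def by simp
    next
      case False
      have "pv u \<noteq> x0" using cyc_np[OF c uV(1)] False unfolding z0_def by auto
      then show ?thesis using cyc_pv[OF c uV(1)] False unfolding pv'_def by simp
    qed
    moreover have "pv' (nx' u) = u"
    proof (cases "u = y0")
      case True then show ?thesis unfolding nx'_def pv'_def by simp
    next
      case False
      have "nx u \<noteq> z0"
      proof
        assume "nx u = z0"
        then have "pv (nx u) = x0" using pz0 by simp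
        then show False using cyc_pn[OF c uV(1)] uV(2) by simp
      qed
      then show ?thesis using False cyc_pn[OF c uV(1)] unfolding nx'_def pv'_def by simp
    qed
    moreover have "nx' (pv' u) = u"
    proof (cases "u = z0")
      case True then show ?thesis unfolding nx'_def pv'_def by simp
    next
      case False
      have "pv u \<noteq> y0"
      proof
        assume "pv u = y0"
        then have "nx (pv u) = x0" using ny0 by simp
        then show False using cyc_np[OF c uV(1)] uV(2) by simp
      qed
      then show ?thesis using False cyc_np[OF c uV(1)] unfolding nx'_def pv'_def by simp
    qed
    ultimately show ?thesis by blast
  qed
  have B: "\<forall>u\<in>V - {x0}. (nx ^^ k) u = w \<longrightarrow> (\<exists>k'. (nx' ^^ k') u = w)" if w: "w \<in> V - {x0}" for w k
  proof (induction k rule: less_induct)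
    case (less k)
    show ?case
    proof (intro ballI impI)
      fix u assume u: "u \<in> V - {x0}" and k: "(nx ^^ k) u = w"
      show "\<exists>k'. (nx' ^^ k') u = w"
      proof (cases k)
        case 0
        then show ?thesis using k by (intro exI[of _ 0]) simp
      next
        case (Suc k1)
        have ks: "(nx ^^ k1) (nx u) = w" using k Suc by (simp only: funpow_Suc_right o_apply)
        show ?thesis
        proof (cases "u = y0")
          case False
          have nu: "nx u \<in> V - {x0}" using A[OF u] False unfolding nx'_def by simp
          have "k1 < k" using Suc by simp
          then obtain k' where "(nx' ^^ k') (nx u) = w" using less.IH[of k1] nu ks by blast
          then have "(nx' ^^ Suc k') u = w" using False unfolding nx'_def by (simp only: funpow_Suc_right o_apply if_False)
          then show ?thesis by blast
        next
          case True
          have "k1 \<noteq> 0"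
          proof
            assume "k1 = 0"
            then have "w = x0" using ks True ny0 by simp
            then show False using w by simp
          qed
          then obtain k2 where k2: "k1 = Suc k2" using not0_implies_Suc by blast
          have kz: "(nx ^^ k2) z0 = w" using ks True ny0 k2 unfolding z0_def by (simp only: funpow_Suc_right o_apply)
          have z0V': "z0 \<in> V - {x0}" using z0V z0x by simp
          have "k2 < k" using Suc k2 by simp
          then obtain k' where "(nx' ^^ k') z0 = w" using less.IH[of k2] z0V' kz by blast
          moreover have "(nx' ^^ Suc k') u = (nx' ^^ k') (nx' u)" by (simp only: funpow_Suc_right o_apply)
          moreover have "nx' u = z0" unfolding nx'_def using True by simp
          ultimately have "(nx' ^^ Suc k') u = w" by simp
          then show ?thesis by blast
        qed
      qed
    qed
  qed
  have C: "\<exists>k. (nx' ^^ k) u = w" if uw: "u \<in> V - {x0}" "w \<in> V - {x0}" for u w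
  proof -
    have "u \<in> V" "w \<in> V" using uw by auto
    then obtain k where "(nx ^^ k) u = w" using cyc_conn[OF c] by blast
    then show ?thesis using B[OF uw(2), of k] uw(1) by blast
  qed
  show ?thesis unfolding cyc_def using A C unfolding nx'_def pv'_def y0_def z0_def by blast
qed

lemma cyc_single:
  assumes c: "cyc V nx pv" and x0: "x0 \<in> V" and e: "pv x0 = x0" and u: "u \<in> V"
  shows "u = x0"
proof -
  have n: "nx x0 = x0" using cyc_np[OF c x0] e by simp
  have it: "(nx ^^ k) x0 = x0" for k by (induction k) (simp_all add: n)
  obtain k where "(nx ^^ k) x0 = u" using cyc_conn[OF c x0 u] by blast
  then show ?thesis using it by simp
qed

context fvs begin

lemma gen_case1:
  assumes c: "cyc V nx pv" and fin: "finite V" and v: "v \<in> V"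
    and W: "\<forall>u\<in>V. subspace (W u) \<and> dim (W u) = m" and m: "m > 0"
    and ph: "\<forall>u\<in>V. semilinear_on scale (frob_pow p (a u)) (W (pv u)) (W u) (\<phi> u)"
    and ps: "\<forall>u\<in>V. semilinear_on scale (frob_pow p (b u)) (W u) (W (pv u)) (\<psi> u)"
    and psph: "\<forall>u\<in>V. \<forall>y\<in>W (pv u). \<psi> u (\<phi> u y) = 0"
    and k: "\<forall>u\<in>V. \<exists>y\<in>W u. y \<noteq> 0 \<and> \<psi> u y = 0"
  shows "\<exists>x. \<forall>u\<in>V. x u \<in> W u \<and> x u \<noteq> 0 \<and> \<phi> u (x (pv u)) \<in> span {x u} \<and> \<psi> u (x u) \<in> span {x (pv u)}"
proof -
  define K where "K = (\<lambda>u. {y \<in> W u. \<psi> u y = 0})"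
  have KP: "\<forall>u\<in>V. subspace (K u) \<and> dim (K u) > 0"
  proof
    fix u assume u: "u \<in> V"
    have Wu: "subspace (W u)" "dim (W u) > 0" using W m u by auto
    have psu: "semilinear_on scale (frob_pow p (b u)) (W u) (W (pv u)) (\<psi> u)" using ps u by blast
    have sK: "subspace (K u)" unfolding K_def by (rule SL_ker_sub[OF psu Wu(1)])
    obtain y where y: "y \<in> W u" "y \<noteq> 0" "\<psi> u y = 0" using k u by blast
    have "y \<in> K u" unfolding K_def using y by simp
    moreover have "K u \<subseteq> W u" unfolding K_def by blast
    ultimately show "subspace (K u) \<and> dim (K u) > 0" using D_sub(1)[OF Wu sK] y(2) sK by blast
  qed
  have gP: "\<forall>u\<in>V. semilinear_on scale (frob_pow p (a u)) (K (pv u)) (K u) (\<phi> u)"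
  proof
    fix u assume u: "u \<in> V"
    have phu: "semilinear_on scale (frob_pow p (a u)) (W (pv u)) (W u) (\<phi> u)" using ph u by blast
    show "semilinear_on scale (frob_pow p (a u)) (K (pv u)) (K u) (\<phi> u)"
    proof (rule SL_mono[OF phu])
      show "K (pv u) \<subseteq> W (pv u)" unfolding K_def by blast
      fix y assume "y \<in> K (pv u)"
      then have "y \<in> W (pv u)" unfolding K_def by blast
      then show "\<phi> u y \<in> K u" unfolding K_def using SL_in[OF phu] psph u by blast
    qed
  qed
  obtain x where x: "\<forall>u\<in>V. x u \<in> K u \<and> x u \<noteq> 0 \<and> \<phi> u (x (pv u)) \<in> span {x u}"
    using fwd[OF c fin v KP gP] by blast
  have "\<forall>u\<in>V. x u \<in> W u \<and> \<psi> u (x u) = 0" using x unfolding K_def by blast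
  then show ?thesis using x span_zero by auto
qed

lemma gen_case2:
  assumes c: "cyc V nx pv" and fin: "finite V" and v: "v \<in> V"
    and W: "\<forall>u\<in>V. subspace (W u) \<and> dim (W u) = m" and m: "m > 0"
    and ph: "\<forall>u\<in>V. semilinear_on scale (frob_pow p (a u)) (W (pv u)) (W u) (\<phi> u)"
    and ps: "\<forall>u\<in>V. semilinear_on scale (frob_pow p (b u)) (W u) (W (pv u)) (\<psi> u)"
    and phps: "\<forall>u\<in>V. \<forall>y\<in>W u. \<phi> u (\<psi> u y) = 0"
    and k: "\<forall>u\<in>V. \<exists>y\<in>W (pv u). y \<noteq> 0 \<and> \<phi> u y = 0"
  shows "\<exists>x. \<forall>u\<in>V. x u \<in> W u \<and> x u \<noteq> 0 \<and> \<phi> u (x (pv u)) \<in> span {x u} \<and> \<psi> u (x u) \<in> span {x (pv u)}"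
proof -
  have c': "cyc V pv nx" by (rule cyc_rev[OF c])
  define K where "K = (\<lambda>t. {y \<in> W t. \<phi> (nx t) y = 0})"
  have KP: "\<forall>t\<in>V. subspace (K t) \<and> dim (K t) > 0"
  proof
    fix t assume t: "t \<in> V"
    have nt: "nx t \<in> V" by (rule cyc_nx[OF c t])
    have pnt: "pv (nx t) = t" by (rule cyc_pn[OF c t])
    have Wt: "subspace (W t)" "dim (W t) > 0" using W m t by auto
    have phu: "semilinear_on scale (frob_pow p (a (nx t))) (W t) (W (nx t)) (\<phi> (nx t))"
      using ph nt pnt by (metis)
    have sK: "subspace (K t)" unfolding K_def by (rule SL_ker_sub[OF phu Wt(1)])
    obtain y where y: "y \<in> W t" "y \<noteq> 0" "\<phi> (nx t) y = 0" using k nt pnt by metis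
    have "y \<in> K t" unfolding K_def using y by simp
    moreover have "K t \<subseteq> W t" unfolding K_def by blast
    ultimately show "subspace (K t) \<and> dim (K t) > 0" using D_sub(1)[OF Wt sK] y(2) sK by blast
  qed
  have gP: "\<forall>t\<in>V. semilinear_on scale (frob_pow p (b (nx t))) (K (nx t)) (K t) (\<psi> (nx t))"
  proof
    fix t assume t: "t \<in> V"
    have nt: "nx t \<in> V" by (rule cyc_nx[OF c t])
    have pnt: "pv (nx t) = t" by (rule cyc_pn[OF c t])
    have psu: "semilinear_on scale (frob_pow p (b (nx t))) (W (nx t)) (W t) (\<psi> (nx t))"
      using ps nt pnt by (metis)
    show "semilinear_on scale (frob_pow p (b (nx t))) (K (nx t)) (K t) (\<psi> (nx t))"
    proof (rule SL_mono[OF psu])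
      show "K (nx t) \<subseteq> W (nx t)" unfolding K_def by blast
      fix y assume "y \<in> K (nx t)"
      then have y: "y \<in> W (nx t)" unfolding K_def by blast
      have "\<psi> (nx t) y \<in> W t" using SL_in[OF psu y] .
      moreover have "\<phi> (nx t) (\<psi> (nx t) y) = 0" using phps nt y by blast
      ultimately show "\<psi> (nx t) y \<in> K t" unfolding K_def by blast
    qed
  qed
  obtain x where x: "\<forall>t\<in>V. x t \<in> K t \<and> x t \<noteq> 0 \<and> \<psi> (nx t) (x (nx t)) \<in> span {x t}"
    using fwd[OF c' fin v KP gP] by blast
  have "x u \<in> W u \<and> x u \<noteq> 0 \<and> \<phi> u (x (pv u)) \<in> span {x u} \<and> \<psi> u (x u) \<in> span {x (pv u)}"
    if u: "u \<in> V" for u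
  proof -
    have pu: "pv u \<in> V" by (rule cyc_pv[OF c u])
    have npu: "nx (pv u) = u" by (rule cyc_np[OF c u])
    have "x (pv u) \<in> K (pv u)" using x pu by blast
    then have "\<phi> u (x (pv u)) = 0" unfolding K_def npu by blast
    moreover have "\<psi> u (x u) \<in> span {x (pv u)}" using x pu npu by metis
    moreover have "x u \<in> W u" "x u \<noteq> 0" using x u unfolding K_def by auto
    ultimately show ?thesis using span_zero by simp
  qed
  then show ?thesis by blast
qed

lemma gen:
  assumes "cyc V nx pv" and "finite V" and "v \<in> V"
    and W: "\<forall>u\<in>V. subspace (W u) \<and> dim (W u) = m" and m: "m > 0"
    and "\<forall>u\<in>V. semilinear_on scale (frob_pow p (a u)) (W (pv u)) (W u) (\<phi> u)"
    and "\<forall>u\<in>V. semilinear_on scale (frob_pow p (b u)) (W u) (W (pv u)) (\<psi> u)"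
    and "\<forall>u\<in>V. \<forall>y\<in>W (pv u). \<psi> u (\<phi> u y) = 0"
    and "\<forall>u\<in>V. \<forall>y\<in>W u. \<phi> u (\<psi> u y) = 0"
  shows "\<exists>x. \<forall>u\<in>V. x u \<in> W u \<and> x u \<noteq> 0 \<and> \<phi> u (x (pv u)) \<in> span {x u} \<and> \<psi> u (x u) \<in> span {x (pv u)}"
  using assms(1-4,6-9)
proof (induction "card V" arbitrary: V nx pv v \<phi> \<psi> a b rule: less_induct)
  case less
  note c = less.prems(1) and fin = less.prems(2) and v = less.prems(3) and WV = less.prems(4)
    and ph = less.prems(5) and ps = less.prems(6) and psph = less.prems(7) and phps = less.prems(8)
  note W = WV
  show ?case
  proof (cases "\<forall>u\<in>V. \<exists>y\<in>W u. y \<noteq> 0 \<and> \<psi> u y = 0")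
    case True
    show ?thesis by (rule gen_case1[OF c fin v WV m ph ps psph True])
  next
    case F1: False
    show ?thesis
    proof (cases "\<forall>u\<in>V. \<exists>y\<in>W (pv u). y \<noteq> 0 \<and> \<phi> u y = 0")
      case True
      show ?thesis by (rule gen_case2[OF c fin v WV m ph ps phps True])
    next
      case F2: False
      obtain e where e: "e \<in> V" "\<forall>y\<in>W e. y \<noteq> 0 \<longrightarrow> \<psi> e y \<noteq> 0" using F1 by blast
      obtain x0 where x0: "x0 \<in> V" "\<forall>y\<in>W (pv x0). y \<noteq> 0 \<longrightarrow> \<phi> x0 y \<noteq> 0" using F2 by blast
      define y0 where "y0 = pv x0"
      define z0 where "z0 = nx x0"
      have y0V: "y0 \<in> V" unfolding y0_def by (rule cyc_pv[OF c x0(1)])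
      have z0V: "z0 \<in> V" unfolding z0_def by (rule cyc_nx[OF c x0(1)])
      have pz0: "pv z0 = x0" unfolding z0_def by (rule cyc_pn[OF c x0(1)])
      have Wx: "subspace (W x0)" "dim (W x0) = m" using W x0(1) by auto
      have Wy: "subspace (W y0)" "dim (W y0) = m" using W y0V by auto
      have Wz: "subspace (W z0)" "dim (W z0) = m" using W z0V by auto
      have phx: "semilinear_on scale (frob_pow p (a x0)) (W y0) (W x0) (\<phi> x0)" using ph x0(1) unfolding y0_def by blast
      have injx: "\<forall>y\<in>W y0. \<phi> x0 y = 0 \<longrightarrow> y = 0" using x0(2) unfolding y0_def by blast
      have imx: "\<phi> x0 ` W y0 = W x0"
      proof (rule D_inj_surj[OF phx Wy(1) Wx(1) _ _ injx, where \<tau> = "frob_pow p (- a x0)"])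
        show "dim (W y0) > 0" using Wy m by simp
        show "dim (W x0) = dim (W y0)" using Wx Wy by simp
        show "frob_pow p (a x0) (frob_pow p (- a x0) c) = c" for c :: 'a by (rule frob_inv1(2)[OF pr pp])
        show "frob_pow p (a x0) (0::'a) = 0" by (rule frob_0[OF pr pp])
      qed
      have injo: "inj_on (\<phi> x0) (W y0)" by (rule inj_onI) (rule SL_inj0[OF phx Wy(1) injx])
      have bij: "bij_betw (\<phi> x0) (W y0) (W x0)" using injo imx by (simp add: bij_betw_def)
      have psx0: "\<psi> x0 y = 0" if yW: "y \<in> W x0" for y
      proof -
        have "y \<in> \<phi> x0 ` W y0" using yW imx by simp
        then obtain z where "z \<in> W y0" "y = \<phi> x0 z" by blast
        then show ?thesis using psph x0(1) unfolding y0_def by simp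
      qed
      have y0x: "y0 \<noteq> x0"
      proof
        assume yx: "y0 = x0"
        have "e = x0" by (rule cyc_single[OF c x0(1) _ e(1)]) (use yx y0_def in simp)
        obtain y where y: "y \<in> W x0" "y \<noteq> 0" using D_nz[OF Wx(1)] Wx(2) m by auto
        then show False using psx0[OF y(1)] e(2) \<open>e = x0\<close> by blast
      qed
      have z0x: "z0 \<noteq> x0"
      proof
        assume "z0 = x0"
        then have "pv x0 = x0" using pz0 by simp
        then show False using y0x unfolding y0_def by simp
      qed
      define V' where "V' = V - {x0}"
      define nx' where "nx' = (\<lambda>u. if u = y0 then z0 else nx u)"
      define pv' where "pv' = (\<lambda>u. if u = z0 then y0 else pv u)"
      have c': "cyc V' nx' pv'" unfolding V'_def nx'_def pv'_def y0_def z0_def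
        by (rule cyc_contract[OF c x0(1)]) (use y0x y0_def in simp)
      have fin': "finite V'" unfolding V'_def using fin by simp
      have y0V': "y0 \<in> V'" unfolding V'_def using y0V y0x by simp
      have z0V': "z0 \<in> V'" unfolding V'_def using z0V z0x by simp
      have W': "\<forall>u\<in>V'. subspace (W u) \<and> dim (W u) = m" using W unfolding V'_def by blast
      have card': "card V' < card V" unfolding V'_def using fin x0(1) by (rule card_Diff1_less)
      define phi where "phi = inv_into (W y0) (\<phi> x0)"
      have phiS: "semilinear_on scale (frob_pow p (- a x0)) (W x0) (W y0) phi"
        unfolding phi_def by (rule SL_inv[OF phx bij _ Wy(1)]) (rule frob_inv1(2)[OF pr pp])
      have phphi: "\<phi> x0 (phi t) = t" if "t \<in> W x0" for t
        unfolding phi_def using that imx by (simp add: f_inv_into_f)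
      have phi0: "phi 0 = 0" by (rule SL_0[OF phiS Wx(1)])
      define \<phi>' where "\<phi>' = (\<lambda>u. if u = z0 then (\<lambda>y. \<phi> z0 (\<phi> x0 y)) else \<phi> u)"
      define \<psi>' where "\<psi>' = (\<lambda>u. if u = z0 then (\<lambda>y. phi (\<psi> z0 y)) else \<psi> u)"
      define a' where "a' = (\<lambda>u. if u = z0 then a z0 + a x0 else a u)"
      define b' where "b' = (\<lambda>u. if u = z0 then - a x0 + b z0 else b u)"
      have phz0: "semilinear_on scale (frob_pow p (a z0)) (W (pv z0)) (W z0) (\<phi> z0)" using ph z0V by blast
      have psz0: "semilinear_on scale (frob_pow p (b z0)) (W z0) (W (pv z0)) (\<psi> z0)" using ps z0V by blast
      have phz: "semilinear_on scale (frob_pow p (a z0)) (W x0) (W z0) (\<phi> z0)" using phz0 unfolding pz0 .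
      have psz: "semilinear_on scale (frob_pow p (b z0)) (W z0) (W x0) (\<psi> z0)" using psz0 unfolding pz0 .
      have pvne: "pv u \<noteq> x0" if "u \<in> V'" "u \<noteq> z0" for u
      proof
        assume "pv u = x0"
        then have "nx (pv u) = z0" unfolding z0_def by simp
        moreover have "nx (pv u) = u" using that unfolding V'_def by (intro cyc_np[OF c]) simp
        ultimately show False using that by simp
      qed
      have ph': "\<forall>u\<in>V'. semilinear_on scale (frob_pow p (a' u)) (W (pv' u)) (W u) (\<phi>' u)"
      proof
        fix u assume u: "u \<in> V'"
        show "semilinear_on scale (frob_pow p (a' u)) (W (pv' u)) (W u) (\<phi>' u)"
        proof (cases "u = z0")
          case True
          have "semilinear_on scale (\<lambda>c. frob_pow p (a z0) (frob_pow p (a x0) c)) (W y0) (W z0) (\<lambda>y. \<phi> z0 (\<phi> x0 y))"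
            by (rule SL_comp[OF phx phz])
          then show ?thesis unfolding frob_fun_comp using True unfolding a'_def pv'_def \<phi>'_def by simp
        next
          case False
          then show ?thesis using ph u unfolding a'_def pv'_def \<phi>'_def V'_def by simp
        qed
      qed
      have ps': "\<forall>u\<in>V'. semilinear_on scale (frob_pow p (b' u)) (W u) (W (pv' u)) (\<psi>' u)"
      proof
        fix u assume u: "u \<in> V'"
        show "semilinear_on scale (frob_pow p (b' u)) (W u) (W (pv' u)) (\<psi>' u)"
        proof (cases "u = z0")
          case True
          have "semilinear_on scale (\<lambda>c. frob_pow p (- a x0) (frob_pow p (b z0) c)) (W z0) (W y0) (\<lambda>y. phi (\<psi> z0 y))"
            by (rule SL_comp[OF psz phiS])
          then show ?thesis unfolding frob_fun_comp using True unfolding b'_def pv'_def \<psi>'_def by simp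
        next
          case False
          then show ?thesis using ps u unfolding b'_def pv'_def \<psi>'_def V'_def by simp
        qed
      qed
      have psph': "\<forall>u\<in>V'. \<forall>y\<in>W (pv' u). \<psi>' u (\<phi>' u y) = 0"
      proof (intro ballI)
        fix u y assume u: "u \<in> V'" and y: "y \<in> W (pv' u)"
        show "\<psi>' u (\<phi>' u y) = 0"
        proof (cases "u = z0")
          case True
          then have yy: "y \<in> W y0" using y unfolding pv'_def by simp
          have "\<phi> x0 y \<in> W (pv z0)" using SL_in[OF phx yy] pz0 by simp
          then have "\<psi> z0 (\<phi> z0 (\<phi> x0 y)) = 0" using psph z0V by blast
          then show ?thesis using True phi0 unfolding \<psi>'_def \<phi>'_def by simp
        next
          case False
          then show ?thesis using psph u y unfolding \<psi>'_def \<phi>'_def pv'_def V'_def by simp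
        qed
      qed
      have phps': "\<forall>u\<in>V'. \<forall>y\<in>W u. \<phi>' u (\<psi>' u y) = 0"
      proof (intro ballI)
        fix u y assume u: "u \<in> V'" and y: "y \<in> W u"
        show "\<phi>' u (\<psi>' u y) = 0"
        proof (cases "u = z0")
          case True
          then have yz: "y \<in> W z0" using y by simp
          have "\<psi> z0 y \<in> W x0" using SL_in[OF psz yz] .
          then have "\<phi> x0 (phi (\<psi> z0 y)) = \<psi> z0 y" by (rule phphi)
          moreover have "\<phi> z0 (\<psi> z0 y) = 0" using phps z0V yz by blast
          ultimately show ?thesis using True unfolding \<psi>'_def \<phi>'_def by simp
        next
          case False
          then show ?thesis using phps u y unfolding \<psi>'_def \<phi>'_def V'_def by simp
        qed
      qed
      obtain x' where x': "\<forall>u\<in>V'. x' u \<in> W u \<and> x' u \<noteq> 0 \<and> \<phi>' u (x' (pv' u)) \<in> span {x' u}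
              \<and> \<psi>' u (x' u) \<in> span {x' (pv' u)}"
        using less.hyps[OF card' c' fin' y0V' W' ph' ps' psph' phps'] by blast
      define x where "x = (\<lambda>u. if u = x0 then \<phi> x0 (x' y0) else x' u)"
      have xy0: "x y0 = x' y0" unfolding x_def using y0x by simp
      have xx0: "x x0 = \<phi> x0 (x' y0)" unfolding x_def by simp
      have x'y0: "x' y0 \<in> W y0" "x' y0 \<noteq> 0" using x' y0V' by auto
      have "x u \<in> W u \<and> x u \<noteq> 0 \<and> \<phi> u (x (pv u)) \<in> span {x u} \<and> \<psi> u (x u) \<in> span {x (pv u)}"
        if u: "u \<in> V" for u
      proof (cases "u = x0")
        case True
        have i1: "x x0 \<in> W x0" unfolding xx0 by (rule SL_in[OF phx x'y0(1)])
        have i2: "x x0 \<noteq> 0" unfolding xx0 using injx x'y0 by blast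
        have i3: "\<phi> x0 (x (pv x0)) \<in> span {x x0}"
          using span_base[of "x x0" "{x x0}"] unfolding y0_def[symmetric] xy0 xx0 by simp
        have i4: "\<psi> x0 (x x0) \<in> span {x (pv x0)}" using psx0[OF i1] span_zero by simp
        show ?thesis using True i1 i2 i3 i4 by simp
      next
        case ux: False
        have uV': "u \<in> V'" unfolding V'_def using u ux by simp
        have xu: "x u = x' u" unfolding x_def using ux by simp
        have xu': "x' u \<in> W u \<and> x' u \<noteq> 0" using x' uV' by blast
        show ?thesis
        proof (cases "u = z0")
          case True
          have e1: "\<phi>' z0 (x' (pv' z0)) \<in> span {x' z0}" using x' z0V' by blast
          then have "\<phi> z0 (x x0) \<in> span {x z0}"
            unfolding \<phi>'_def pv'_def xx0 using z0x x_def by simp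
          then have i3: "\<phi> u (x (pv u)) \<in> span {x u}" using True pz0 by simp
          have e2: "phi (\<psi> z0 (x' z0)) \<in> span {x' y0}" using x' z0V' unfolding \<psi>'_def pv'_def by auto
          then obtain k where k: "phi (\<psi> z0 (x' z0)) = k *s x' y0" unfolding span_singleton by blast
          have t: "\<psi> z0 (x' z0) \<in> W x0" using SL_in[OF psz] x' z0V' by blast
          have "\<psi> z0 (x' z0) = \<phi> x0 (phi (\<psi> z0 (x' z0)))" using phphi[OF t] by simp
          also have "\<dots> = frob_pow p (a x0) k *s \<phi> x0 (x' y0)" unfolding k by (rule SL_scale[OF phx x'y0(1)])
          also have "\<dots> \<in> span {x x0}" unfolding xx0 by (intro span_scale span_base) simp
          finally have i4: "\<psi> u (x u) \<in> span {x (pv u)}" using True pz0 xu by simp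
          show ?thesis using xu xu' i3 i4 by simp
        next
          case uz: False
          have pne: "pv u \<noteq> x0" by (rule pvne[OF uV' uz])
          have xp: "x (pv u) = x' (pv u)" unfolding x_def using pne by simp
          have pv'u: "pv' u = pv u" unfolding pv'_def using uz by simp
          have A: "\<phi>' u (x' (pv' u)) \<in> span {x' u} \<and> \<psi>' u (x' u) \<in> span {x' (pv' u)}"
            using x' uV' by blast
          have "\<phi> u (x' (pv u)) \<in> span {x' u} \<and> \<psi> u (x' u) \<in> span {x' (pv u)}"
            using A uz unfolding \<phi>'_def \<psi>'_def pv'u by simp
          then show ?thesis using xu xu' xp by simp
        qed
      qed
      then show ?thesis by blast
    qed
  qed
qed

end

lemma predf_lt: "f \<ge> 1 \<Longrightarrow> predf f u < f"
  unfolding predf_def by simp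

lemma predf_nx: "f \<ge> 1 \<Longrightarrow> u < f \<Longrightarrow> predf f (Suc u mod f) = u"
proof -
  assume f: "f \<ge> 1" and u: "u < f"
  show ?thesis
  proof (cases "Suc u < f")
    case True
    then have "predf f (Suc u mod f) = (u + f) mod f" unfolding predf_def by simp
    then show ?thesis using u by simp
  next
    case False
    then have "Suc u = f" using u by simp
    then show ?thesis unfolding predf_def using f by simp
  qed
qed

lemma nx_predf: "f \<ge> 1 \<Longrightarrow> u < f \<Longrightarrow> Suc (predf f u) mod f = u"
proof -
  assume f: "f \<ge> 1" and u: "u < f"
  show ?thesis
  proof (cases "u = 0")
    case True
    then show ?thesis unfolding predf_def using f by simp
  next
    case False
    then have "(u + f - 1) mod f = u - 1"
      using u by (metis Nat.add_diff_assoc2 One_nat_def Suc_leI less_imp_diff_less mod_add_self2 mod_less neq0_conv)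
    then show ?thesis unfolding predf_def using False u by simp
  qed
qed

lemma nx_iter: "((\<lambda>i. Suc i mod f) ^^ k) u = (u + k) mod f" if "u < f"
  using that by (induction k) (simp_all add: mod_Suc_eq)

lemma cyc_std: "f \<ge> 1 \<Longrightarrow> cyc {0..<f} (\<lambda>i. Suc i mod f) (predf f)"
proof -
  assume f: "f \<ge> 1"
  have A: "\<forall>u\<in>{0..<f}. Suc u mod f \<in> {0..<f} \<and> predf f u \<in> {0..<f} \<and> predf f (Suc u mod f) = u
      \<and> Suc (predf f u) mod f = u"
    using f predf_lt[OF f] predf_nx[OF f] nx_predf[OF f] by simp
  have B: "\<exists>k. ((\<lambda>i. Suc i mod f) ^^ k) u = w" if "u \<in> {0..<f}" "w \<in> {0..<f}" for u w
  proof -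
    have "((\<lambda>i. Suc i mod f) ^^ (w + f - u)) u = (u + (w + f - u)) mod f"
      using that by (intro nx_iter) simp
    also have "u + (w + f - u) = w + f" using that by simp
    also have "(w + f) mod f = w" using that by simp
    finally show ?thesis by blast
  qed
  show ?thesis unfolding cyc_def using A B by blast
qed

theorem theorem6p1:
  fixes scale :: "'k::alg_closed_field \<Rightarrow> 'v::ab_group_add \<Rightarrow> 'v"
    and p f m :: nat
    and W :: "nat \<Rightarrow> 'v set"
    and \<phi> \<psi> :: "nat \<Rightarrow> 'v \<Rightarrow> 'v"
    and a b :: "nat \<Rightarrow> int"
  assumes vs: "vector_space scale"
    and p: "prime p" "CHAR('k) = p"
    and f: "f \<ge> 1"
    and m: "m > 0"
    and W: "\<And>i. i < f \<Longrightarrow> module.subspace scale (W i)"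
    and Wdim: "\<And>i. i < f \<Longrightarrow> vector_space.dim scale (W i) = m"
    and \<phi>: "\<And>i. i < f \<Longrightarrow> semilinear_on scale (frob_pow p (a i)) (W (predf f i)) (W i) (\<phi> i)"
    and \<psi>: "\<And>i. i < f \<Longrightarrow> semilinear_on scale (frob_pow p (b i)) (W i) (W (predf f i)) (\<psi> i)"
    and \<psi>\<phi>: "\<And>i x. i < f \<Longrightarrow> x \<in> W (predf f i) \<Longrightarrow> \<psi> i (\<phi> i x) = 0"
    and \<phi>\<psi>: "\<And>i y. i < f \<Longrightarrow> y \<in> W i \<Longrightarrow> \<phi> i (\<psi> i y) = 0"
  shows "\<exists>L :: nat \<Rightarrow> 'v set.
           (\<forall>i<f. module.subspace scale (L i) \<and> L i \<subseteq> W i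
                  \<and> vector_space.dim scale (L i) = 1)
         \<and> (\<forall>i<f. \<phi> i ` L (predf f i) \<subseteq> L i \<and> \<psi> i ` L i \<subseteq> L (predf f i))"
proof -
  interpret F: fvs scale p by (intro fvs.intro fvs_axioms.intro vs p)
  have c: "cyc {0..<f} (\<lambda>i. Suc i mod f) (predf f)" by (rule cyc_std[OF f])
  have v: "0 \<in> {0..<f}" using f by simp
  obtain x where x: "\<forall>u\<in>{0..<f}. x u \<in> W u \<and> x u \<noteq> 0 \<and> \<phi> u (x (predf f u)) \<in> F.span {x u}
        \<and> \<psi> u (x u) \<in> F.span {x (predf f u)}"
  proof (rule F.gen[OF c _ v, where W=W and m=m and \<phi>=\<phi> and a=a and \<psi>=\<psi> and b=b, THEN exE])
    show "finite {0..<f}" by simp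
    show "\<forall>u\<in>{0..<f}. F.subspace (W u) \<and> F.dim (W u) = m" using W Wdim by simp
    show "m > 0" by (rule m)
    show "\<forall>u\<in>{0..<f}. semilinear_on scale (frob_pow p (a u)) (W (predf f u)) (W u) (\<phi> u)" using \<phi> by simp
    show "\<forall>u\<in>{0..<f}. semilinear_on scale (frob_pow p (b u)) (W u) (W (predf f u)) (\<psi> u)" using \<psi> by simp
    show "\<forall>u\<in>{0..<f}. \<forall>y\<in>W (predf f u). \<psi> u (\<phi> u y) = 0" using \<psi>\<phi> by simp
    show "\<forall>u\<in>{0..<f}. \<forall>y\<in>W u. \<phi> u (\<psi> u y) = 0" using \<phi>\<psi> by simp
  qed blast
  define L where "L = (\<lambda>i. F.span {x i})"
  have P1: "F.subspace (L i) \<and> L i \<subseteq> W i \<and> F.dim (L i) = 1" if i: "i < f" for i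
  proof -
    have "x i \<in> W i" "x i \<noteq> 0" using x i by auto
    then show ?thesis unfolding L_def using F.span_minimal[of "{x i}" "W i"] W[OF i] F.D_line by auto
  qed
  have P2: "\<phi> i ` L (predf f i) \<subseteq> L i \<and> \<psi> i ` L i \<subseteq> L (predf f i)" if i: "i < f" for i
  proof -
    have pi: "predf f i < f" by (rule predf_lt[OF f])
    have xs: "x (predf f i) \<in> W (predf f i)" "x i \<in> W i" using x i pi by auto
    have e1: "\<phi> i (x (predf f i)) \<in> F.span {x i}" "\<psi> i (x i) \<in> F.span {x (predf f i)}" using x i by auto
    have A: "\<phi> i ` L (predf f i) \<subseteq> L i"
    proof
      fix z assume "z \<in> \<phi> i ` L (predf f i)"
      then obtain k where z: "z = \<phi> i (scale k (x (predf f i)))" unfolding L_def F.span_singleton by blast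
      have "z = scale (frob_pow p (a i) k) (\<phi> i (x (predf f i)))"
        unfolding z by (rule F.SL_scale[OF \<phi>[OF i] xs(1)])
      then show "z \<in> L i" unfolding L_def using F.span_scale[OF e1(1)] by simp
    qed
    have B: "\<psi> i ` L i \<subseteq> L (predf f i)"
    proof
      fix z assume "z \<in> \<psi> i ` L i"
      then obtain k where z: "z = \<psi> i (scale k (x i))" unfolding L_def F.span_singleton by blast
      have "z = scale (frob_pow p (b i) k) (\<psi> i (x i))"
        unfolding z by (rule F.SL_scale[OF \<psi>[OF i] xs(2)])
      then show "z \<in> L (predf f i)" unfolding L_def using F.span_scale[OF e1(2)] by simp
    qed
    show ?thesis using A B by blast
  qed
  show ?thesis using P1 P2 by blast
qed


end
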